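(* Let $\pi(\cdot\,|\,\mathbf{x})$ be a smooth positive probability density on $\Theta=\mathbb{R}^d$ with $\log\pi$ smooth. Let $f_0,\dots,f_K:\Theta\to\mathbb{R}$ be smooth functions and let $A^0,\dots,A^K\in\mathbb{R}^{d\times d}$ be symmetric matrices (not necessarily positive) such that $A(\theta)=\sum_{k=0}^K A^kf_k(\theta)$ is a symmetric positive definite matrix for every $\theta\in\Theta$, with $\theta\mapsto A(\theta)^{1/2}$ smooth. Let $\eta_0,\dots,\eta_K>0$. Consider the extended adaptive Langevin dynamics on $(\theta,p,\xi_0,\dots,\xi_K)\in\Theta\times\mathbb{R}^d\times(\mathbb{R}^{d\times d})^{K+1}$: $$\begin{aligned}d\theta_t&=p_t\,dt,\\ dp_t&=\nabla_\theta\log\pi(\theta_t|\mathbf{x})\,dt-\xi_t(\theta_t)p_t\,dt+\sqrt{2}A(\theta_t)^{1/2}dW_t,\\ d[\xi_{k,t}]_{i,j}&=\frac{f_k(\theta_t)}{\eta_k}\big(p_{i,t}p_{j,t}-\delta_{i,j}\big)\,dt,\qquad 1\le i,j\le d,\ 0\le k\le K,\end{aligned}$$ where $\xi_t(\theta)=\sum_{k=0}^K\xi_{k,t}f_k(\theta)$ and $W$ is a standard $d$-dimensional Brownian motion. Then the probability measure $$\nu_K(d\theta\,dp\,d\xi_0\cdots d\xi_K)=\pi(\theta|\mathbf{x})\,d\theta\;\tau(dp)\;\prod_{k=0}^K\prod_{i,j=1}^d\sqrt{\frac{\eta_k}{2\pi}}\exp\Big(-\frac{\eta_k}{2}\big([\xi_k]_{i,j}-[A^k]_{i,j}\big)^2\Big)\,d[\xi_k]_{i,j},$$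 with $\tau(dp)=(2\pi)^{-d/2}e^{-|p|^2/2}dp$, is invariant for this dynamics: for every smooth compactly supported function $\varphi$, $\int\mathcal{L}\varphi\,d\nu_K=0$, where $\mathcal{L}$ is the generator of the dynamics. In particular the marginal of $\nu_K$ in $\theta$ is $\pi(\cdot|\mathbf{x})$.
   Context: $[\xi_k]_{i,j}$ denotes the $(i,j)$ entry of $\xi_k\in\mathbb{R}^{d\times d}$; all $d^2$ entries of each $\xi_k$ are treated as independent variables. In the paper's application, $A(\theta)=\Gamma+\frac{\epsilon(n)\Delta t}{2}\Sigma_{\mathbf{x}}(\theta)$ with $\Gamma$ a friction matrix and $\Sigma_{\mathbf{x}}$ the covariance of a stochastic gradient estimator, and the hypothesis is that this matrix decomposes on the basis $f_0,\dots,f_K$. The generator is $\mathcal{L}=p^T\nabla_\theta+\nabla_\theta(\log\pi)^T\nabla_p-p^T\xi(\theta)^T\nabla_p+A(\theta):\nabla_p^2+\sum_{k=0}^K\frac{f_k(\theta)}{\eta_k}\sum_{i,j}(p_ip_j-\delta_{i,j})\partial_{[\xi_k]_{i,j}}$ (with $\xi(\theta)p$ the drift term in $p$), where $M^1:M^2=\sum_{i,j}M^1_{i,j}M^2_{i,j}$. *)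

theory Defs
  imports "HOL-Probability.Probability"
begin

definition pdiff :: "'a::real_normed_vector \<Rightarrow> ('a \<Rightarrow> 'b::real_normed_vector) \<Rightarrow> 'a \<Rightarrow> 'b" where
  "pdiff v f x = frechet_derivative f (at x) v"

fun iter_pdiff :: "'a::real_normed_vector list \<Rightarrow> ('a \<Rightarrow> 'b::real_normed_vector) \<Rightarrow> 'a \<Rightarrow> 'b" where
  "iter_pdiff [] f = f"
| "iter_pdiff (v # vs) f = pdiff v (iter_pdiff vs f)"

definition smooth :: "('a::real_normed_vector \<Rightarrow> 'b::real_normed_vector) \<Rightarrow> bool" where
  "smooth f \<longleftrightarrow> (\<forall>vs x. iter_pdiff vs f differentiable (at x))"

definition symmetric_mat :: "real^'n^'n \<Rightarrow> bool" where
  "symmetric_mat M \<longleftrightarrow> transpose M = M"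

definition pos_def_mat :: "real^'n^'n \<Rightarrow> bool" where
  "pos_def_mat M \<longleftrightarrow> symmetric_mat M \<and> (\<forall>v. v \<noteq> 0 \<longrightarrow> 0 < v \<bullet> (M *v v))"

definition pos_semidef_mat :: "real^'n^'n \<Rightarrow> bool" where
  "pos_semidef_mat M \<longleftrightarrow> symmetric_mat M \<and> (\<forall>v. 0 \<le> v \<bullet> (M *v v))"

text \<open>State space: (theta, p, xi) with xi $ k $ i $ j = [xi_k]_{i,j}; the index type 'k has K+1 elements.\<close>
type_synonym ('n, 'k) state = "(real^'n) \<times> (real^'n) \<times> (real^'n^'n^'k)"

definition dir_theta :: "'n::finite \<Rightarrow> ('n, 'k::finite) state" where
  "dir_theta i = (axis i 1, 0, 0)"
definition dir_p :: "'n::finite \<Rightarrow> ('n, 'k::finite) state" where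
  "dir_p i = (0, axis i 1, 0)"
definition dir_xi :: "'k::finite \<Rightarrow> 'n::finite \<Rightarrow> 'n \<Rightarrow> ('n, 'k) state" where
  "dir_xi k i j = (0, 0, axis k (axis i (axis j 1)))"

definition Amat :: "('k::finite \<Rightarrow> real^'n \<Rightarrow> real) \<Rightarrow> real^'n^'n^'k \<Rightarrow> real^'n \<Rightarrow> real^'n::finite^'n" where
  "Amat f A0 \<theta> = (\<Sum>k\<in>UNIV. f k \<theta> *\<^sub>R A0 $ k)"

definition xi_of :: "('k::finite \<Rightarrow> real^'n \<Rightarrow> real) \<Rightarrow> real^'n^'n^'k \<Rightarrow> real^'n \<Rightarrow> real^'n::finite^'n" where
  "xi_of f \<xi> \<theta> = (\<Sum>k\<in>UNIV. f k \<theta> *\<^sub>R \<xi> $ k)"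

definition generator ::
  "(real^'n \<Rightarrow> real) \<Rightarrow> ('k \<Rightarrow> real^'n \<Rightarrow> real) \<Rightarrow> real^'n^'n^'k \<Rightarrow> ('k \<Rightarrow> real)
    \<Rightarrow> (('n::finite, 'k::finite) state \<Rightarrow> real) \<Rightarrow> ('n, 'k) state \<Rightarrow> real" where
  "generator \<pi> f A0 \<eta> \<phi> z = (case z of (\<theta>, p, \<xi>) \<Rightarrow>
      (\<Sum>i\<in>UNIV. p $ i * pdiff (dir_theta i) \<phi> z)
    + (\<Sum>i\<in>UNIV. pdiff (axis i 1) (\<lambda>t. ln (\<pi> t)) \<theta> * pdiff (dir_p i) \<phi> z)
    - (\<Sum>i\<in>UNIV. (xi_of f \<xi> \<theta> *v p) $ i * pdiff (dir_p i) \<phi> z)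
    + (\<Sum>i\<in>UNIV. \<Sum>j\<in>UNIV. Amat f A0 \<theta> $ i $ j * iter_pdiff [dir_p i, dir_p j] \<phi> z)
    + (\<Sum>k\<in>UNIV. f k \<theta> / \<eta> k *
         (\<Sum>i\<in>UNIV. \<Sum>j\<in>UNIV. (p $ i * p $ j - (if i = j then 1 else 0)) * pdiff (dir_xi k i j) \<phi> z)))"

definition nuK_density ::
  "(real^'n \<Rightarrow> real) \<Rightarrow> real^'n^'n^'k \<Rightarrow> ('k \<Rightarrow> real) \<Rightarrow> ('n::finite, 'k::finite) state \<Rightarrow> real" where
  "nuK_density \<pi> A0 \<eta> z = (case z of (\<theta>, p, \<xi>) \<Rightarrow>
      \<pi> \<theta> * ((2 * pi) powr (- real CARD('n) / 2) * exp (- (norm p)\<^sup>2 / 2))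
      * (\<Prod>k\<in>UNIV. \<Prod>i\<in>UNIV. \<Prod>j\<in>UNIV.
           sqrt (\<eta> k / (2 * pi)) * exp (- (\<eta> k / 2) * (\<xi> $ k $ i $ j - A0 $ k $ i $ j)\<^sup>2)))"

definition nuK :: "(real^'n \<Rightarrow> real) \<Rightarrow> real^'n^'n^'k \<Rightarrow> ('k \<Rightarrow> real) \<Rightarrow> ('n::finite, 'k::finite) state measure" where
  "nuK \<pi> A0 \<eta> = density lborel (\<lambda>z. ennreal (nuK_density \<pi> A0 \<eta> z))"

end

theory Submission
  imports Defs
begin

lemma pdiff_eq: "(f has_derivative f') (at x) \<Longrightarrow> pdiff v f x = f' v"
  by (simp add: pdiff_def frechet_derivative_at[symmetric])

lemma deriv_zero_outside:
  fixes h :: "'a::real_normed_vector \<Rightarrow> 'b::real_normed_vector"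
  assumes "closed S" "\<And>x. x \<notin> S \<Longrightarrow> h x = 0" "x \<notin> S"
  shows "pdiff v h x = 0"
proof -
  have "(h has_derivative (\<lambda>_. 0)) (at x)"
    apply (rule has_derivative_transform_within_open[where f="\<lambda>_. 0" and s="- S"])
    using assms by auto
  then show ?thesis by (simp add: pdiff_eq)
qed

lemma ibp_zero:
  fixes h :: "'a::euclidean_space \<Rightarrow> real"
  assumes hd: "\<And>x. h differentiable (at x)"
    and cont: "continuous_on UNIV (pdiff v h)"
    and S: "compact S" and supp: "\<And>x. x \<notin> S \<Longrightarrow> h x = 0"
  shows "integrable lborel (pdiff v h) \<and> integral\<^sup>L lborel (pdiff v h) = 0"
proof -
  have hder: "(h has_derivative frechet_derivative h (at x)) (at x)" for x
    using hd frechet_derivative_works by blast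
  have clS: "closed S" using S compact_imp_closed by blast
  have z: "pdiff v h x = 0" if "x \<notin> S" for x
    using deriv_zero_outside[OF clS supp that] .
  have eqi: "pdiff v h = (\<lambda>x. indicator S x *\<^sub>R pdiff v h x)"
    using z by (auto simp: fun_eq_iff split: split_indicator)
  have int1: "integrable lborel (pdiff v h)"
    by (subst eqi, rule borel_integrable_compact[OF S]) (rule continuous_on_subset[OF cont], auto)
  have hcont: "continuous_on UNIV h"
    using hd by (simp add: differentiable_imp_continuous_within continuous_at_imp_continuous_on)
  have hmeas: "h \<in> borel_measurable borel"
    using hcont by (rule borel_measurable_continuous_onI)
  have eqh: "h = (\<lambda>x. indicator S x *\<^sub>R h x)"
    using supp by (auto simp: fun_eq_iff split: split_indicator)
  have inth: "integrable lborel h"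
    by (subst eqh, rule borel_integrable_compact[OF S]) (rule continuous_on_subset[OF hcont], auto)
  have shift: "integrable lborel (\<lambda>x. h (c + x)) \<and> integral\<^sup>L lborel (\<lambda>x. h (c + x)) = integral\<^sup>L lborel h" for c
  proof -
    have "integrable (distr lborel borel ((+) c)) h" using inth by (simp add: lborel_distr_plus)
    then have I: "integrable lborel (\<lambda>x. h (c + x))"
      by (subst (asm) integrable_distr_eq) (auto simp: hmeas)
    have "integral\<^sup>L lborel h = integral\<^sup>L (distr lborel borel ((+) c)) h"
      by (simp add: lborel_distr_plus)
    also have "\<dots> = integral\<^sup>L lborel (\<lambda>x. h (c + x))"
      by (subst integral_distr) (auto simp: hmeas)
    finally show ?thesis using I by simp
  qed
  obtain M where M: "\<And>x. \<bar>pdiff v h x\<bar> \<le> M"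
  proof -
    have "compact ((\<lambda>x. pdiff v h x) ` S)"
      by (rule compact_continuous_image[OF continuous_on_subset[OF cont] S]) auto
    then obtain B where B: "\<And>y. y \<in> (\<lambda>x. pdiff v h x) ` S \<Longrightarrow> norm y \<le> B"
      using compact_imp_bounded bounded_iff by metis
    show ?thesis
      apply (rule that[of "max B 0"])
      subgoal for x using B[of "pdiff v h x"] z[of x] by (cases "x \<in> S") auto
      done
  qed
  define g where "g x s = h (x + s *\<^sub>R v)" for x s
  have gder: "(g x has_real_derivative pdiff v h (x + s *\<^sub>R v)) (at s)" for x s
  proof -
    have "((\<lambda>s. x + s *\<^sub>R v) has_derivative (\<lambda>s. s *\<^sub>R v)) (at s)"
      by (auto intro!: derivative_eq_intros)
    from has_derivative_compose[OF this hder]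
    have d: "(g x has_derivative (\<lambda>s'. frechet_derivative h (at (x + s *\<^sub>R v)) (s' *\<^sub>R v))) (at s)"
      by (simp add: g_def[abs_def])
    have lin: "linear (frechet_derivative h (at (x + s *\<^sub>R v)))"
      using hder has_derivative_linear by blast
    have "(\<lambda>s'. frechet_derivative h (at (x + s *\<^sub>R v)) (s' *\<^sub>R v)) = (*) (pdiff v h (x + s *\<^sub>R v))"
      using linear_scale[OF lin] by (auto simp: fun_eq_iff pdiff_def)
    with d show ?thesis by (simp add: has_field_derivative_def)
  qed
  define t where "t n = 1 / real (Suc n)" for n
  have tpos: "t n > 0" for n by (simp add: t_def)
  define F where "F n x = (h (t n *\<^sub>R v + x) - h x) / t n" for n x
  have intF: "integral\<^sup>L lborel (F n) = 0" for n
  proof -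
    have "integral\<^sup>L lborel (F n) = (integral\<^sup>L lborel (\<lambda>x. h (t n *\<^sub>R v + x)) - integral\<^sup>L lborel h) / t n"
      unfolding F_def using shift[of "t n *\<^sub>R v"] inth by simp
    then show ?thesis using shift[of "t n *\<^sub>R v"] by simp
  qed
  have Fbound: "\<bar>F n x\<bar> \<le> M" for n x
  proof -
    obtain z where "g x (t n) - g x 0 = (t n - 0) * pdiff v h (x + z *\<^sub>R v)"
      using MVT2[of 0 "t n" "g x" "\<lambda>s. pdiff v h (x + s *\<^sub>R v)"] tpos[of n] gder by blast
    then have "F n x = pdiff v h (x + z *\<^sub>R v)"
      using tpos[of n] by (simp add: F_def g_def add.commute)
    then show ?thesis using M by simp
  qed
  define S' where "S' = (\<lambda>(y, s). y + s *\<^sub>R v) ` (S \<times> {-1..1})"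
  have S': "compact S'"
    unfolding S'_def
    by (rule compact_continuous_image) (auto intro!: continuous_intros compact_Times S simp: case_prod_unfold)
  have Fzero: "F n x = 0" if "x \<notin> S'" for n x
  proof -
    have "x \<notin> S" using that unfolding S'_def by (force intro: image_eqI[where x="(x, 0)"])
    moreover have "t n *\<^sub>R v + x \<notin> S"
    proof
      assume "t n *\<^sub>R v + x \<in> S"
      moreover have "t n \<le> 1" by (simp add: t_def)
      ultimately have "(t n *\<^sub>R v + x) + (- t n) *\<^sub>R v \<in> S'"
        unfolding S'_def using tpos[of n] by (intro image_eqI[where x="(t n *\<^sub>R v + x, - t n)"]) auto
      then show False using that by simp
    qed
    ultimately show ?thesis by (simp add: F_def supp)
  qed
  have lim: "(\<lambda>n. F n x) \<longlonglongrightarrow> pdiff v h x" for x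
  proof -
    have "((\<lambda>s. (g x (0 + s) - g x 0) / s) \<longlongrightarrow> pdiff v h x) (at 0)"
      using gder[of x 0] by (simp add: DERIV_def)
    moreover have "filterlim t (at 0) sequentially"
    proof (rule filterlim_atI)
      show "t \<longlonglongrightarrow> 0" unfolding t_def using LIMSEQ_inverse_real_of_nat by (simp add: inverse_eq_divide)
      show "\<forall>\<^sub>F n in sequentially. t n \<noteq> 0" using tpos by (simp add: less_imp_neq[symmetric])
    qed
    ultimately have "((\<lambda>n. (g x (0 + t n) - g x 0) / t n) \<longlongrightarrow> pdiff v h x) sequentially"
      by (rule filterlim_compose)
    then show ?thesis using tpos by (simp add: F_def g_def add.commute)
  qed
  have Fmeas: "F n \<in> borel_measurable lborel" for n
    unfolding F_def using tpos[of n] by (auto intro!: borel_measurable_continuous_onI continuous_intros continuous_on_compose2[OF hcont])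
  have "(\<lambda>n. integral\<^sup>L lborel (F n)) \<longlonglongrightarrow> integral\<^sup>L lborel (pdiff v h)"
  proof (rule integral_dominated_convergence[where w="\<lambda>x. indicator S' x * M"])
    show "pdiff v h \<in> borel_measurable lborel" using int1 by auto
    show "integrable lborel (\<lambda>x. indicator S' x * M)"
      using S' by (auto intro!: emeasure_compact_finite borel_compact integrable_mult_left)
    show "AE x in lborel. (\<lambda>n. F n x) \<longlonglongrightarrow> pdiff v h x" using lim by simp
    show "AE x in lborel. norm (F n x) \<le> indicator S' x * M" for n
      using Fbound[of n] Fzero[of _ n] by (auto split: split_indicator)
  qed (use Fmeas in auto)
  then have "integral\<^sup>L lborel (pdiff v h) = 0"
    using intF by (simp add: LIMSEQ_const_iff)
  with int1 show ?thesis by simp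
qed

lemma diff_cont: "(\<And>x. f differentiable (at x)) \<Longrightarrow> continuous_on UNIV f"
  by (simp add: differentiable_imp_continuous_within continuous_at_imp_continuous_on)

lemma cs_integrable:
  fixes f :: "'a::euclidean_space \<Rightarrow> real"
  assumes "continuous_on UNIV f" "compact S" "\<And>x. x \<notin> S \<Longrightarrow> f x = 0"
  shows "integrable lborel f"
proof -
  have "f = (\<lambda>x. indicator S x *\<^sub>R f x)"
    using assms(3) by (auto simp: fun_eq_iff split: split_indicator)
  then show ?thesis
    by (metis borel_integrable_compact assms(1,2) continuous_on_subset top_greatest)
qed

lemma pdiff_mult:
  assumes "f differentiable (at x)" "g differentiable (at x)"
  shows "pdiff v (\<lambda>x. f x * g x :: real) x = pdiff v f x * g x + f x * pdiff v g x"
proof -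
  have "((\<lambda>x. f x * g x) has_derivative (\<lambda>h. f x * frechet_derivative g (at x) h + frechet_derivative f (at x) h * g x)) (at x)"
    using assms by (intro has_derivative_mult) (auto simp: frechet_derivative_works[symmetric])
  from pdiff_eq[OF this, of v] show ?thesis by (simp add: pdiff_def)
qed

lemma ibp:
  fixes u w :: "'a::euclidean_space \<Rightarrow> real"
  assumes ud: "\<And>x. u differentiable (at x)" and wd: "\<And>x. w differentiable (at x)"
    and uc: "continuous_on UNIV (pdiff v u)" and wc: "continuous_on UNIV (pdiff v w)"
    and S: "compact S" and supp: "\<And>x. x \<notin> S \<Longrightarrow> u x = 0"
  shows "integrable lborel (\<lambda>x. pdiff v u x * w x)"
    and "integrable lborel (\<lambda>x. u x * pdiff v w x)"
    and "integral\<^sup>L lborel (\<lambda>x. pdiff v u x * w x) = - integral\<^sup>L lborel (\<lambda>x. u x * pdiff v w x)"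
proof -
  have clS: "closed S" using S compact_imp_closed by blast
  have z: "pdiff v u x = 0" if "x \<notin> S" for x
    using deriv_zero_outside[OF clS supp that] .
  have ucont: "continuous_on UNIV u" and wcont: "continuous_on UNIV w"
    using ud wd diff_cont by blast+
  show i1: "integrable lborel (\<lambda>x. pdiff v u x * w x)"
    by (rule cs_integrable[OF _ S]) (auto intro!: continuous_intros uc wcont simp: z)
  show i2: "integrable lborel (\<lambda>x. u x * pdiff v w x)"
    by (rule cs_integrable[OF _ S]) (auto intro!: continuous_intros ucont wc simp: supp)
  have pd: "pdiff v (\<lambda>x. u x * w x) = (\<lambda>x. pdiff v u x * w x + u x * pdiff v w x)"
    using pdiff_mult[OF ud wd] by auto
  have "integral\<^sup>L lborel (pdiff v (\<lambda>x. u x * w x)) = 0"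
  proof (rule ibp_zero[THEN conjunct2])
    show "(\<lambda>x. u x * w x) differentiable (at x)" for x using ud wd by (rule differentiable_mult)
    show "continuous_on UNIV (pdiff v (\<lambda>x. u x * w x))"
      unfolding pd by (auto intro!: continuous_intros uc wc ucont wcont)
  qed (use S supp in auto)
  then show "integral\<^sup>L lborel (\<lambda>x. pdiff v u x * w x) = - integral\<^sup>L lborel (\<lambda>x. u x * pdiff v w x)"
    unfolding pd using i1 i2 by simp
qed

lemma has_derivative_vec_nth' [derivative_intros]:
  "(f has_derivative f') F \<Longrightarrow> ((\<lambda>x. f x $ i) has_derivative (\<lambda>h. f' h $ i)) F"
  by (rule bounded_linear.has_derivative[OF bounded_linear_vec_nth])

lemma pdiff_comp_linear:
  assumes "bounded_linear P" "G differentiable (at (P z))"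
  shows "pdiff v (\<lambda>z. G (P z)) z = pdiff (P v) G (P z)"
proof -
  have "((\<lambda>z. G (P z)) has_derivative (\<lambda>x. frechet_derivative G (at (P z)) (P x))) (at z)"
    using has_derivative_compose[OF bounded_linear_imp_has_derivative[OF assms(1)]] assms(2)
      frechet_derivative_works by blast
  from pdiff_eq[OF this, of v] show ?thesis by (simp add: pdiff_def)
qed

lemma pdiff_zero_dir:
  assumes "G differentiable (at x)"
  shows "pdiff 0 G x = 0"
proof -
  have "linear (frechet_derivative G (at x))"
    using assms frechet_derivative_works has_derivative_linear by blast
  then show ?thesis by (simp add: pdiff_def linear_0)
qed

lemma pdiff_linear: "bounded_linear L \<Longrightarrow> pdiff v L z = L v"
  using bounded_linear_imp_has_derivative pdiff_eq by blast

lemma pdiff_const: "pdiff v (\<lambda>_. c) z = 0"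
  using has_derivative_const pdiff_eq by blast

lemma pdiff_sum:
  assumes "finite S" "\<And>j. j \<in> S \<Longrightarrow> F j differentiable (at z)"
  shows "pdiff v (\<lambda>z. \<Sum>j\<in>S. F j z) z = (\<Sum>j\<in>S. pdiff v (F j) z)"
proof -
  have "((\<lambda>z. \<Sum>j\<in>S. F j z) has_derivative (\<lambda>h. \<Sum>j\<in>S. frechet_derivative (F j) (at z) h)) (at z)"
    using assms by (intro has_derivative_sum) (auto simp: frechet_derivative_works[symmetric])
  from pdiff_eq[OF this, of v] show ?thesis by (simp add: pdiff_def)
qed

lemma smooth_diff: "smooth g \<Longrightarrow> g differentiable (at x)"
  unfolding smooth_def using iter_pdiff.simps(1) by metis

lemma smooth_pdiff_diff: "smooth g \<Longrightarrow> pdiff v g differentiable (at x)"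
  unfolding smooth_def by (metis iter_pdiff.simps)

lemma smooth_pdiff2_diff: "smooth g \<Longrightarrow> pdiff a (pdiff b g) differentiable (at x)"
  unfolding smooth_def by (metis iter_pdiff.simps)

definition Qf :: "real^'n^'n^'k \<Rightarrow> ('k \<Rightarrow> real) \<Rightarrow> ((real^'n::finite) \<times> (real^'n^'n^'k::finite)) \<Rightarrow> real" where
  "Qf A0 \<eta> y = - (fst y \<bullet> fst y) / 2
     - (\<Sum>k\<in>UNIV. \<Sum>i\<in>UNIV. \<Sum>j\<in>UNIV. \<eta> k / 2 * (snd y $ k $ i $ j - A0 $ k $ i $ j)\<^sup>2)"

definition Cst :: "real^'n::finite^'n^'k::finite \<Rightarrow> ('k \<Rightarrow> real) \<Rightarrow> real" where
  "Cst A0 \<eta> = (2 * pi) powr (- real CARD('n) / 2)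
      * (\<Prod>k\<in>UNIV. \<Prod>i::'n\<in>UNIV. \<Prod>j::'n\<in>UNIV. sqrt (\<eta> k / (2 * pi)))"

lemma Qf_deriv:
  "(Qf A0 \<eta> has_derivative (\<lambda>d. - (fst y \<bullet> fst d)
     - (\<Sum>k\<in>UNIV. \<Sum>i\<in>UNIV. \<Sum>j\<in>UNIV. \<eta> k * (snd y $ k $ i $ j - A0 $ k $ i $ j) * snd d $ k $ i $ j))) (at y)"
  unfolding Qf_def[abs_def]
  apply (rule derivative_eq_intros refl | simp)+
  apply (simp add: fun_eq_iff inner_commute mult_ac)
  done

lemma nuK_density_eq:
  "nuK_density \<pi> A0 \<eta> z = \<pi> (fst z) * (Cst A0 \<eta> * exp (Qf A0 \<eta> (snd z)))"
proof -
  obtain \<theta> p \<xi> where z: "z = (\<theta>, p, \<xi>)" by (cases z) auto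
  have "(\<Prod>k\<in>UNIV. \<Prod>i\<in>UNIV. \<Prod>j\<in>UNIV.
           sqrt (\<eta> k / (2 * pi)) * exp (- (\<eta> k / 2) * (\<xi> $ k $ i $ j - A0 $ k $ i $ j)\<^sup>2))
     = (\<Prod>k\<in>UNIV. \<Prod>i::'a\<in>UNIV. \<Prod>j::'a\<in>UNIV. sqrt (\<eta> k / (2 * pi)))
       * exp (- (\<Sum>k\<in>UNIV. \<Sum>i\<in>UNIV. \<Sum>j\<in>UNIV. \<eta> k / 2 * (\<xi> $ k $ i $ j - A0 $ k $ i $ j)\<^sup>2))"
    by (simp add: prod.distrib exp_sum sum_negf[symmetric])
  moreover have "exp (- (p \<bullet> p) / 2 - (\<Sum>k\<in>UNIV. \<Sum>i\<in>UNIV. \<Sum>j\<in>UNIV. \<eta> k / 2 * (\<xi> $ k $ i $ j - A0 $ k $ i $ j)\<^sup>2))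
     = exp (- (p \<bullet> p) / 2) * exp (- (\<Sum>k\<in>UNIV. \<Sum>i\<in>UNIV. \<Sum>j\<in>UNIV. \<eta> k / 2 * (\<xi> $ k $ i $ j - A0 $ k $ i $ j)\<^sup>2))"
    by (simp add: exp_add[symmetric])
  ultimately show ?thesis
    unfolding z nuK_density_def Cst_def Qf_def power2_norm_eq_inner
    by (simp only: prod.case fst_conv snd_conv mult_ac)
qed

definition Ef :: "real^'n::finite^'n^'k::finite \<Rightarrow> ('k \<Rightarrow> real) \<Rightarrow> ((real^'n) \<times> (real^'n^'n^'k)) \<Rightarrow> real" where
  "Ef A0 \<eta> y = Cst A0 \<eta> * exp (Qf A0 \<eta> y)"

lemma Ef_deriv: "(Ef A0 \<eta> has_derivative (\<lambda>d. Cst A0 \<eta> * ((- (fst y \<bullet> fst d)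
     - (\<Sum>k\<in>UNIV. \<Sum>i\<in>UNIV. \<Sum>j\<in>UNIV. \<eta> k * (snd y $ k $ i $ j - A0 $ k $ i $ j) * snd d $ k $ i $ j)) * exp (Qf A0 \<eta> y)))) (at y)"
  unfolding Ef_def[abs_def]
  by (rule has_derivative_mult_right[OF DERIV_compose_FDERIV[OF DERIV_exp Qf_deriv]])

lemma Ef_diff: "Ef A0 \<eta> differentiable (at y)"
  using Ef_deriv differentiable_def by blast

lemma pdiff_Ef: "pdiff d (Ef A0 \<eta>) y = Ef A0 \<eta> y * (- (fst y \<bullet> fst d)
     - (\<Sum>k\<in>UNIV. \<Sum>i\<in>UNIV. \<Sum>j\<in>UNIV. \<eta> k * (snd y $ k $ i $ j - A0 $ k $ i $ j) * snd d $ k $ i $ j))"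
  by (simp add: pdiff_eq[OF Ef_deriv] Ef_def)

lemma nuK_density_eq2: "nuK_density \<pi> A0 \<eta> = (\<lambda>z. \<pi> (fst z) * Ef A0 \<eta> (snd z))"
  by (simp add: fun_eq_iff nuK_density_eq Ef_def)

lemma comp_fst_diff: "(\<And>x. g differentiable (at x)) \<Longrightarrow> (\<lambda>z. g (fst z)) differentiable (at z)"
  using differentiable_compose[of g fst z UNIV] bounded_linear_imp_differentiable[OF bounded_linear_fst] by blast

lemma comp_snd_diff: "(\<And>x. g differentiable (at x)) \<Longrightarrow> (\<lambda>z. g (snd z)) differentiable (at z)"
  using differentiable_compose[of g snd z UNIV] bounded_linear_imp_differentiable[OF bounded_linear_snd] by blast

lemma rho_diff:
  assumes "\<And>x. \<pi> differentiable (at x)"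
  shows "nuK_density \<pi> A0 \<eta> differentiable (at z)"
  unfolding nuK_density_eq2
  by (rule differentiable_mult[OF comp_fst_diff[OF assms] comp_snd_diff[OF Ef_diff]])

lemma pdiff_rho:
  assumes "\<And>x. \<pi> differentiable (at x)"
  shows "pdiff v (nuK_density \<pi> A0 \<eta>) z = pdiff (fst v) \<pi> (fst z) * Ef A0 \<eta> (snd z)
     + \<pi> (fst z) * pdiff (snd v) (Ef A0 \<eta>) (snd z)"
  unfolding nuK_density_eq2
  apply (subst pdiff_mult[OF comp_fst_diff[OF assms] comp_snd_diff[OF Ef_diff]])
  apply (subst pdiff_comp_linear[OF bounded_linear_fst assms])
  apply (subst pdiff_comp_linear[OF bounded_linear_snd Ef_diff])
  apply (rule refl)
  done

lemma rho_dtheta: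
  assumes "\<And>x. \<pi> differentiable (at x)"
  shows "pdiff (dir_theta i) (nuK_density \<pi> A0 \<eta>) z = pdiff (axis i 1) \<pi> (fst z) * Ef A0 \<eta> (snd z)"
  by (simp add: pdiff_rho[OF assms] dir_theta_def pdiff_Ef)

lemma rho_dp:
  assumes "\<And>x. \<pi> differentiable (at x)"
  shows "pdiff (dir_p i) (nuK_density \<pi> A0 \<eta>) z = - (fst (snd z) $ i) * nuK_density \<pi> A0 \<eta> z"
proof -
  have "pdiff 0 \<pi> (fst z) = 0" using pdiff_zero_dir assms by blast
  then show ?thesis
    unfolding pdiff_rho[OF assms] by (simp add: dir_p_def pdiff_Ef inner_axis nuK_density_eq2)
qed

lemma sum_axis3:
  "(\<Sum>k'\<in>UNIV. \<Sum>i'\<in>UNIV. \<Sum>j'\<in>UNIV. c k' i' j' * (axis k (axis i (axis j (1::real))) :: real^'n::finite^'n^'k::finite) $ k' $ i' $ j') = c k i j"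
proof -
  have ax: "(axis k (axis i (axis j (1::real))) :: real^'n^'n^'k) $ k' $ i' $ j' = (if k' = k then (if i' = i then (if j' = j then 1 else 0) else 0) else 0)" for k' i' j'
    by (simp add: axis_def)
  have "(\<Sum>j'\<in>UNIV. c k' i' j' * (axis k (axis i (axis j (1::real))) :: real^'n::finite^'n^'k::finite) $ k' $ i' $ j')
     = (if k' = k then if i' = i then c k i j else 0 else 0)" for k' i'
    unfolding ax by (cases "k' = k"; cases "i' = i") (simp_all add: if_distrib[of "\<lambda>x. _ * x"] cong: if_cong)
  moreover have "(\<Sum>i'\<in>UNIV. if k' = k then if i' = i then c k i j else 0 else 0) = (if k' = k then c k i j else 0)" for k'
    by (cases "k' = k") simp_all
  ultimately show ?thesis by simp
qed

lemma rho_dxi: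
  assumes "\<And>x. \<pi> differentiable (at x)"
  shows "pdiff (dir_xi k i j) (nuK_density \<pi> A0 \<eta>) z
     = - (\<eta> k * (snd (snd z) $ k $ i $ j - A0 $ k $ i $ j)) * nuK_density \<pi> A0 \<eta> z"
proof -
  have "pdiff 0 \<pi> (fst z) = 0" using pdiff_zero_dir assms by blast
  then show ?thesis
    unfolding pdiff_rho[OF assms] by (simp add: dir_xi_def pdiff_Ef sum_axis3 nuK_density_eq2)
qed

lemma nn_integral_pair_mult:
  fixes f :: "'a::euclidean_space \<Rightarrow> ennreal" and g :: "'b::euclidean_space \<Rightarrow> ennreal"
  assumes [measurable]: "f \<in> borel_measurable borel" "g \<in> borel_measurable borel"
  shows "(\<integral>\<^sup>+z. f (fst z) * g (snd z) \<partial>lborel) = (\<integral>\<^sup>+x. f x \<partial>lborel) * (\<integral>\<^sup>+y. g y \<partial>lborel)"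
proof -
  have "(\<integral>\<^sup>+z. f (fst z) * g (snd z) \<partial>lborel) = (\<integral>\<^sup>+z. f (fst z) * g (snd z) \<partial>(lborel \<Otimes>\<^sub>M lborel))"
    by (simp add: lborel_prod)
  also have "\<dots> = (\<integral>\<^sup>+x. \<integral>\<^sup>+y. f x * g y \<partial>lborel \<partial>lborel)"
    using lborel.nn_integral_fst[of "\<lambda>z. f (fst z) * g (snd z)" lborel] by simp
  also have "\<dots> = (\<integral>\<^sup>+x. f x * (\<integral>\<^sup>+y. g y \<partial>lborel) \<partial>lborel)"
    by (simp add: nn_integral_cmult)
  also have "\<dots> = (\<integral>\<^sup>+x. f x \<partial>lborel) * (\<integral>\<^sup>+y. g y \<partial>lborel)"
    by (simp add: nn_integral_multc)
  finally show ?thesis .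
qed

lemma nd_integral: assumes "\<sigma> > 0" shows "(\<integral>\<^sup>+x. ennreal (normal_density \<mu> \<sigma> x) \<partial>lborel) = 1"
proof -
  interpret prob_space "density lborel (normal_density \<mu> \<sigma>)" by (rule prob_space_normal_density) (rule assms)
  show ?thesis using emeasure_space_1 by (simp add: emeasure_density)
qed

lemma Basis_vec1: "(Basis :: (real^'n::finite) set) = range (\<lambda>i. axis i 1)"
  by (auto simp: Basis_vec_def)

lemma Basis_vec3: "(Basis :: (real^'n::finite^'n^'k::finite) set) = range (\<lambda>(k, i, j). axis k (axis i (axis j 1)))"
  by (auto simp: Basis_vec_def image_iff; blast)

lemma G_integral:
  "(\<integral>\<^sup>+p. ennreal (\<Prod>i\<in>UNIV. normal_density 0 1 ((p::real^'n::finite) $ i)) \<partial>lborel) = 1"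
proof -
  have "(\<Prod>i\<in>UNIV. normal_density 0 1 ((p::real^'n::finite) $ i)) = (\<Prod>b\<in>Basis. normal_density 0 1 (p \<bullet> b))" for p
    unfolding Basis_vec1
    by (subst prod.reindex) (auto simp: inj_on_def axis_eq_axis inner_axis)
  then have "(\<integral>\<^sup>+p. ennreal (\<Prod>i\<in>UNIV. normal_density 0 1 ((p::real^'n::finite) $ i)) \<partial>lborel)
     = (\<integral>\<^sup>+p. (\<Prod>b\<in>Basis. ennreal (normal_density 0 1 ((p::real^'n) \<bullet> b))) \<partial>lborel)"
    by (simp add: prod_ennreal normal_density_nonneg)
  also have "\<dots> = 1"
    by (subst nn_integral_lborel_prod) (auto simp: nd_integral normal_density_nonneg)
  finally show ?thesis .
qed

lemma prod_UNIV3: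
  "(\<Prod>x\<in>(UNIV :: ('a::finite \<times> 'b::finite \<times> 'c::finite) set). h x) = (\<Prod>a\<in>UNIV. \<Prod>b\<in>UNIV. \<Prod>c\<in>UNIV. h (a, b, c))"
proof -
  have "(\<Prod>a\<in>UNIV. \<Prod>b\<in>UNIV. \<Prod>c\<in>UNIV. h (a, b, c)) = (\<Prod>a\<in>UNIV. \<Prod>(b,c)\<in>UNIV \<times> UNIV. h (a, b, c))"
    by (subst prod.cartesian_product) simp
  also have "\<dots> = (\<Prod>(a, bc)\<in>UNIV \<times> (UNIV \<times> UNIV). h (a, bc))"
    by (subst prod.cartesian_product[symmetric]) (simp add: case_prod_unfold)
  finally show ?thesis by simp
qed

lemma H_integral:
  fixes A0 :: "real^'n::finite^'n^'k::finite" and s :: "'k \<Rightarrow> real"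
  assumes spos: "\<And>k. s k > 0"
  shows "(\<integral>\<^sup>+\<xi>. ennreal (\<Prod>k\<in>UNIV. \<Prod>i\<in>UNIV. \<Prod>j\<in>UNIV. normal_density (A0 $ k $ i $ j) (s k) ((\<xi>::real^'n^'n^'k) $ k $ i $ j)) \<partial>lborel) = 1"
proof -
  define sb where "sb b = (\<Sum>k\<in>UNIV. s k * ((b::real^'n^'n^'k) $ k \<bullet> b $ k))" for b
  have sbv: "sb (axis k (axis i (axis j 1))) = s k" for k i j
  proof -
    have "(axis k (axis i (axis j 1)) :: real^'n^'n^'k) $ k' \<bullet> (axis k (axis i (axis j 1)) :: real^'n^'n^'k) $ k'
        = (if k' = k then 1 else 0)" for k'
      by (cases "k' = k") (simp add: inner_axis_axis, simp add: axis_def)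
    then show ?thesis by (simp add: sb_def if_distrib[of "\<lambda>x. _ * x"] cong: if_cong)
  qed
  have sbpos: "b \<in> Basis \<Longrightarrow> sb b > 0" for b
    unfolding Basis_vec3 using sbv spos by auto
  have "(\<Prod>k\<in>UNIV. \<Prod>i\<in>UNIV. \<Prod>j\<in>UNIV. normal_density (A0 $ k $ i $ j) (s k) ((\<xi>::real^'n^'n^'k) $ k $ i $ j))
       = (\<Prod>b\<in>Basis. normal_density (A0 \<bullet> b) (sb b) (\<xi> \<bullet> b))" for \<xi>
    unfolding Basis_vec3
    apply (subst prod.reindex)
     apply (auto simp: inj_on_def axis_eq_axis)[1]
    apply (simp add: inner_axis sbv prod_UNIV3)
    done
  then have "(\<integral>\<^sup>+\<xi>. ennreal (\<Prod>k\<in>UNIV. \<Prod>i\<in>UNIV. \<Prod>j\<in>UNIV. normal_density (A0 $ k $ i $ j) (s k) ((\<xi>::real^'n^'n^'k) $ k $ i $ j)) \<partial>lborel)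
    = (\<integral>\<^sup>+\<xi>. (\<Prod>b\<in>Basis. ennreal (normal_density (A0 \<bullet> b) (sb b) (\<xi> \<bullet> b))) \<partial>lborel)"
    by (simp add: prod_ennreal normal_density_nonneg)
  also have "\<dots> = 1"
    by (subst nn_integral_lborel_prod) (auto simp: nd_integral normal_density_nonneg sbpos)
  finally show ?thesis .
qed

definition Gf :: "real^'n::finite \<Rightarrow> real" where
  "Gf p = (\<Prod>i\<in>UNIV. normal_density 0 1 (p $ i))"

definition Hf :: "real^'n::finite^'n^'k::finite \<Rightarrow> ('k \<Rightarrow> real) \<Rightarrow> real^'n^'n^'k \<Rightarrow> real" where
  "Hf A0 \<eta> \<xi> = (\<Prod>k\<in>UNIV. \<Prod>i\<in>UNIV. \<Prod>j\<in>UNIV. normal_density (A0 $ k $ i $ j) (1 / sqrt (\<eta> k)) (\<xi> $ k $ i $ j))"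

lemma Gf_eq: "Gf (p::real^'n::finite) = (2 * pi) powr (- real CARD('n) / 2) * exp (- (norm p)\<^sup>2 / 2)"
proof -
  have c: "(2 * pi) powr (- real CARD('n) / 2) = (1 / sqrt (2 * pi)) ^ CARD('n)"
  proof -
    have "(2 * pi) powr (- real CARD('n) / 2) = ((2 * pi) powr (- 1 / 2)) powr real CARD('n)"
      by (simp add: powr_powr)
    also have "\<dots> = ((2 * pi) powr (- 1 / 2)) ^ CARD('n)"
      by (simp add: powr_realpow)
    also have "(2 * pi) powr (- 1 / 2) = 1 / sqrt (2 * pi)"
      by (simp add: powr_minus_divide powr_half_sqrt)
    finally show ?thesis .
  qed
  have n: "(norm p)\<^sup>2 = (\<Sum>i\<in>UNIV. (p $ i)\<^sup>2)"
    unfolding power2_norm_eq_inner inner_vec_def by (simp add: power2_eq_square)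
  have e: "exp (- (\<Sum>i\<in>UNIV. (p $ i)\<^sup>2) / 2) = (\<Prod>i\<in>UNIV. exp (- (p $ i)\<^sup>2 / 2))"
    by (simp add: exp_sum[symmetric] sum_negf sum_divide_distrib)
  show ?thesis
    unfolding Gf_def normal_density_def c n e
    by (simp add: prod.distrib power_one_over prod_dividef)
qed

lemma nd_eta: "\<eta> > 0 \<Longrightarrow> normal_density a (1 / sqrt \<eta>) x = sqrt (\<eta> / (2 * pi)) * exp (- (\<eta> / 2) * (x - a)\<^sup>2)"
  unfolding normal_density_def
  by (simp add: power_divide real_sqrt_divide field_simps)

lemma nuK_density_GH:
  assumes "\<And>k. \<eta> k > 0"
  shows "nuK_density \<pi> A0 \<eta> z = \<pi> (fst z) * (Gf (fst (snd z) :: real^'n) * Hf A0 \<eta> (snd (snd z)))"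
proof -
  obtain \<theta> p \<xi> where z: "z = (\<theta>, p, \<xi>)" by (cases z) auto
  show ?thesis
    by (simp add: z nuK_density_def Gf_eq Hf_def nd_eta assms mult_ac)
qed

lemma Gf_cont: "continuous_on UNIV Gf"
  unfolding Gf_def normal_density_def by (intro continuous_intros) auto

lemma Hf_cont: "(\<And>k. \<eta> k > 0) \<Longrightarrow> continuous_on UNIV (Hf A0 \<eta>)"
  unfolding Hf_def normal_density_def by (intro continuous_intros) (auto simp: less_imp_neq[symmetric])

lemma nuK_measure:
  fixes \<pi> :: "real^'n::finite \<Rightarrow> real" and A0 :: "real^'n^'n^'k::finite"
  assumes pc: "continuous_on UNIV \<pi>" and pp: "\<And>x. 0 \<le> \<pi> x"
    and pi_prob: "(\<pi> has_integral 1) UNIV" and eta: "\<And>k. \<eta> k > 0"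
  shows "prob_space (nuK \<pi> A0 \<eta>)" "distr (nuK \<pi> A0 \<eta>) lborel fst = density lborel (\<lambda>\<theta>. ennreal (\<pi> \<theta>))"
proof -
  have pm[measurable]: "\<pi> \<in> borel_measurable borel" using pc by (rule borel_measurable_continuous_onI)
  have Gm[measurable]: "Gf \<in> borel_measurable borel" using Gf_cont by (rule borel_measurable_continuous_onI)
  have Hm[measurable]: "Hf A0 \<eta> \<in> borel_measurable borel" using Hf_cont[OF eta] by (rule borel_measurable_continuous_onI)
  have Gnn: "Gf p \<ge> 0" for p by (simp add: Gf_def prod_nonneg normal_density_nonneg)
  have Hnn: "Hf A0 \<eta> x \<ge> 0" for x by (simp add: Hf_def prod_nonneg normal_density_nonneg)
  have GHm[measurable]: "(\<lambda>y. Gf (fst y :: real^'n) * Hf A0 \<eta> (snd y)) \<in> borel_measurable borel"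
    by (intro borel_measurable_continuous_onI continuous_intros continuous_on_compose2[OF Gf_cont]
        continuous_on_compose2[OF Hf_cont[OF eta]]) auto
  have GH1: "(\<integral>\<^sup>+y. ennreal (Gf (fst y :: real^'n) * Hf A0 \<eta> (snd y)) \<partial>lborel) = 1"
  proof -
    have "(\<integral>\<^sup>+y. ennreal (Gf (fst y :: real^'n) * Hf A0 \<eta> (snd y)) \<partial>lborel)
        = (\<integral>\<^sup>+y. ennreal (Gf (fst y :: real^'n)) * ennreal (Hf A0 \<eta> (snd y)) \<partial>lborel)"
      by (simp add: ennreal_mult Gnn Hnn)
    also have "\<dots> = (\<integral>\<^sup>+p. ennreal (Gf (p :: real^'n)) \<partial>lborel) * (\<integral>\<^sup>+x. ennreal (Hf A0 \<eta> x) \<partial>lborel)"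
      by (rule nn_integral_pair_mult) auto
    also have "\<dots> = 1"
      using G_integral H_integral[of "\<lambda>k. 1 / sqrt (\<eta> k)" A0] eta unfolding Gf_def Hf_def by simp
    finally show ?thesis .
  qed
  have main: "(\<integral>\<^sup>+z. ennreal (nuK_density \<pi> A0 \<eta> z) * indicator (A \<times> UNIV) z \<partial>lborel)
      = (\<integral>\<^sup>+x. ennreal (\<pi> x) * indicator A x \<partial>lborel)" if [measurable]: "A \<in> sets borel" for A
  proof -
    have "(\<integral>\<^sup>+z. ennreal (nuK_density \<pi> A0 \<eta> z) * indicator (A \<times> UNIV) z \<partial>lborel)
       = (\<integral>\<^sup>+z. (ennreal (\<pi> (fst z)) * indicator A (fst z)) * ennreal (Gf (fst (snd z) :: real^'n) * Hf A0 \<eta> (snd (snd z))) \<partial>lborel)"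
      by (intro nn_integral_cong) (auto simp: nuK_density_GH eta ennreal_mult pp Gnn Hnn mult_ac split: split_indicator)
    also have "\<dots> = (\<integral>\<^sup>+x. ennreal (\<pi> x) * indicator A x \<partial>lborel) * (\<integral>\<^sup>+y. ennreal (Gf (fst y :: real^'n) * Hf A0 \<eta> (snd y)) \<partial>lborel)"
      by (rule nn_integral_pair_mult[where g="\<lambda>y. ennreal (Gf (fst y :: real^'n) * Hf A0 \<eta> (snd y))"]) auto
    finally show ?thesis using GH1 by simp
  qed
  have rm[measurable]: "nuK_density \<pi> A0 \<eta> \<in> borel_measurable borel"
    unfolding nuK_density_GH[OF eta, abs_def]
    by (intro borel_measurable_continuous_onI continuous_intros continuous_on_compose2[OF Gf_cont]
        continuous_on_compose2[OF Hf_cont[OF eta]] continuous_on_compose2[OF pc]) auto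
  have pi1: "(\<integral>\<^sup>+x. ennreal (\<pi> x) \<partial>lborel) = 1"
    using nn_integral_has_integral_lborel[OF pm pp pi_prob] by simp
  show "prob_space (nuK \<pi> A0 \<eta>)"
  proof
    have "emeasure (nuK \<pi> A0 \<eta>) (space (nuK \<pi> A0 \<eta>)) = (\<integral>\<^sup>+z. ennreal (nuK_density \<pi> A0 \<eta> z) * indicator (UNIV \<times> UNIV) z \<partial>lborel)"
      unfolding nuK_def by (subst emeasure_density) auto
    also have "\<dots> = 1" using main[of UNIV] pi1 by simp
    finally show "emeasure (nuK \<pi> A0 \<eta>) (space (nuK \<pi> A0 \<eta>)) = 1" .
  qed
  show "distr (nuK \<pi> A0 \<eta>) lborel fst = density lborel (\<lambda>\<theta>. ennreal (\<pi> \<theta>))"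
  proof (rule measure_eqI)
    show "sets (distr (nuK \<pi> A0 \<eta>) lborel fst) = sets (density lborel (\<lambda>\<theta>. ennreal (\<pi> \<theta>)))"
      by simp
    fix A assume "A \<in> sets (distr (nuK \<pi> A0 \<eta>) lborel fst)"
    then have [measurable]: "A \<in> sets borel" by simp
    have fm: "(fst :: ((real^'n) \<times> (real^'n) \<times> (real^'n^'n^'k)) \<Rightarrow> real^'n) \<in> borel_measurable borel"
      by (intro borel_measurable_continuous_onI continuous_intros)
    have [measurable]: "A \<times> (UNIV :: ((real^'n) \<times> (real^'n^'n^'k)) set) \<in> sets borel"
      using measurable_sets[OF fm, of A] by (simp add: vimage_fst)
    have "emeasure (distr (nuK \<pi> A0 \<eta>) lborel fst) A = emeasure (nuK \<pi> A0 \<eta>) (fst -` A \<inter> space (nuK \<pi> A0 \<eta>))"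
      by (rule emeasure_distr) (auto simp: nuK_def intro!: borel_measurable_continuous_onI continuous_intros)
    also have "fst -` A \<inter> space (nuK \<pi> A0 \<eta>) = A \<times> UNIV" by (auto simp: nuK_def)
    also have "emeasure (nuK \<pi> A0 \<eta>) (A \<times> UNIV) = (\<integral>\<^sup>+z. ennreal (nuK_density \<pi> A0 \<eta> z) * indicator (A \<times> UNIV) z \<partial>lborel)"
      unfolding nuK_def by (subst emeasure_density) auto
    also have "\<dots> = emeasure (density lborel (\<lambda>\<theta>. ennreal (\<pi> \<theta>))) A"
      using main by (subst emeasure_density) auto
    finally show "emeasure (distr (nuK \<pi> A0 \<eta>) lborel fst) A = emeasure (density lborel (\<lambda>\<theta>. ennreal (\<pi> \<theta>))) A" .
  qed
qed

lemma lin_comb: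
  fixes P1 P2 P3 Q1 Q2 Q3 :: "'i::finite \<Rightarrow> 'a \<Rightarrow> real"
    and P4 Q4 :: "'i \<Rightarrow> 'i \<Rightarrow> 'a \<Rightarrow> real"
    and P5 Q5 :: "'k::finite \<Rightarrow> 'i \<Rightarrow> 'i \<Rightarrow> 'a \<Rightarrow> real"
  assumes i1: "\<And>i. integrable M (P1 i) \<and> integrable M (Q1 i) \<and> integral\<^sup>L M (P1 i) = - integral\<^sup>L M (Q1 i)"
    and i2: "\<And>i. integrable M (P2 i) \<and> integrable M (Q2 i) \<and> integral\<^sup>L M (P2 i) = - integral\<^sup>L M (Q2 i)"
    and i3: "\<And>i. integrable M (P3 i) \<and> integrable M (Q3 i) \<and> integral\<^sup>L M (P3 i) = - integral\<^sup>L M (Q3 i)"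
    and i4: "\<And>i j. integrable M (P4 i j) \<and> integrable M (Q4 i j) \<and> integral\<^sup>L M (P4 i j) = - integral\<^sup>L M (Q4 i j)"
    and i5: "\<And>k i j. integrable M (P5 k i j) \<and> integrable M (Q5 k i j) \<and> integral\<^sup>L M (P5 k i j) = - integral\<^sup>L M (Q5 k i j)"
    and z: "\<And>x. (\<Sum>i\<in>UNIV. Q1 i x) + (\<Sum>i\<in>UNIV. Q2 i x) - (\<Sum>i\<in>UNIV. Q3 i x)
        + (\<Sum>i\<in>UNIV. \<Sum>j\<in>UNIV. Q4 i j x) + (\<Sum>k\<in>UNIV. \<Sum>i\<in>UNIV. \<Sum>j\<in>UNIV. Q5 k i j x) = 0"
  shows "integrable M (\<lambda>x. (\<Sum>i\<in>UNIV. P1 i x) + (\<Sum>i\<in>UNIV. P2 i x) - (\<Sum>i\<in>UNIV. P3 i x)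
        + (\<Sum>i\<in>UNIV. \<Sum>j\<in>UNIV. P4 i j x) + (\<Sum>k\<in>UNIV. \<Sum>i\<in>UNIV. \<Sum>j\<in>UNIV. P5 k i j x))
    \<and> integral\<^sup>L M (\<lambda>x. (\<Sum>i\<in>UNIV. P1 i x) + (\<Sum>i\<in>UNIV. P2 i x) - (\<Sum>i\<in>UNIV. P3 i x)
        + (\<Sum>i\<in>UNIV. \<Sum>j\<in>UNIV. P4 i j x) + (\<Sum>k\<in>UNIV. \<Sum>i\<in>UNIV. \<Sum>j\<in>UNIV. P5 k i j x)) = 0"
proof -
  have I: "integrable M (P1 i)" "integrable M (P2 i)" "integrable M (P3 i)" "integrable M (P4 i j)" "integrable M (P5 k i j)"
    "integrable M (Q1 i)" "integrable M (Q2 i)" "integrable M (Q3 i)" "integrable M (Q4 i j)" "integrable M (Q5 k i j)" for i j k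
    using i1 i2 i3 i4 i5 by auto
  have E: "integral\<^sup>L M (P1 i) = - integral\<^sup>L M (Q1 i)" "integral\<^sup>L M (P2 i) = - integral\<^sup>L M (Q2 i)"
    "integral\<^sup>L M (P3 i) = - integral\<^sup>L M (Q3 i)" "integral\<^sup>L M (P4 i j) = - integral\<^sup>L M (Q4 i j)"
    "integral\<^sup>L M (P5 k i j) = - integral\<^sup>L M (Q5 k i j)" for i j k
    using i1 i2 i3 i4 i5 by auto
  have "integral\<^sup>L M (\<lambda>x. (\<Sum>i\<in>UNIV. Q1 i x) + (\<Sum>i\<in>UNIV. Q2 i x) - (\<Sum>i\<in>UNIV. Q3 i x)
        + (\<Sum>i\<in>UNIV. \<Sum>j\<in>UNIV. Q4 i j x) + (\<Sum>k\<in>UNIV. \<Sum>i\<in>UNIV. \<Sum>j\<in>UNIV. Q5 k i j x)) = 0"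
    using z by simp
  then have "(\<Sum>i\<in>UNIV. integral\<^sup>L M (Q1 i)) + (\<Sum>i\<in>UNIV. integral\<^sup>L M (Q2 i)) - (\<Sum>i\<in>UNIV. integral\<^sup>L M (Q3 i))
        + (\<Sum>i\<in>UNIV. \<Sum>j\<in>UNIV. integral\<^sup>L M (Q4 i j)) + (\<Sum>k\<in>UNIV. \<Sum>i\<in>UNIV. \<Sum>j\<in>UNIV. integral\<^sup>L M (Q5 k i j)) = 0"
    by (simp add: I integral_add integral_diff integral_sum integrable_sum integrable_add integrable_diff)
  then show ?thesis
    by (simp add: I E integral_add integral_diff integral_sum integrable_sum integrable_add integrable_diff sum_negf)
qed

lemma bl_p: "bounded_linear (\<lambda>z::('a::real_normed_vector \<times> (real^'n::finite) \<times> 'c::real_normed_vector). fst (snd z) $ i)"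
  by (intro bounded_linear_compose[OF bounded_linear_vec_nth] bounded_linear_compose[OF bounded_linear_fst bounded_linear_snd])

lemma bl_xi: "bounded_linear (\<lambda>z::('a::real_normed_vector \<times> 'b::real_normed_vector \<times> (real^'n::finite^'n^'k::finite)). snd (snd z) $ k $ i $ j)"
  by (intro bounded_linear_compose[OF bounded_linear_vec_nth] bounded_linear_compose[OF bounded_linear_snd bounded_linear_snd])

lemma bl_thxi: "bounded_linear (\<lambda>z::('a::real_normed_vector \<times> 'b::real_normed_vector \<times> 'c::real_normed_vector). (fst z, snd (snd z)))"
  by (intro bounded_linear_Pair bounded_linear_fst bounded_linear_compose[OF bounded_linear_snd bounded_linear_snd])

lemma bl_thp: "bounded_linear (\<lambda>z::('a::real_normed_vector \<times> 'b::real_normed_vector \<times> 'c::real_normed_vector). (fst z, fst (snd z)))"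
  by (intro bounded_linear_Pair bounded_linear_fst bounded_linear_compose[OF bounded_linear_fst bounded_linear_snd])

lemma pdiff_p: "pdiff v (\<lambda>z::('a::real_normed_vector \<times> (real^'n) \<times> 'c::real_normed_vector). fst (snd z) $ i) z = fst (snd v) $ i"
  using pdiff_linear[OF bl_p] .

lemma diff_p: "(\<lambda>z::('a::real_normed_vector \<times> (real^'n) \<times> 'c::real_normed_vector). fst (snd z) $ i) differentiable (at z)"
  using bounded_linear_imp_differentiable[OF bl_p] .

lemma diff_xi: "(\<lambda>z::('a::real_normed_vector \<times> 'b::real_normed_vector \<times> (real^'n^'n^'k)). snd (snd z) $ k $ i $ j) differentiable (at z)"
  using bounded_linear_imp_differentiable[OF bl_xi] .

lemma pdiff_fst_zero:
  assumes "\<And>x. g differentiable (at x)" "fst v = 0"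
  shows "pdiff v (\<lambda>z. g (fst z)) z = 0"
  using pdiff_comp_linear[OF bounded_linear_fst assms(1), of v z] pdiff_zero_dir[OF assms(1)] assms(2) by simp

lemma pdiff_thxi_zero:
  assumes "\<And>x. g differentiable (at x)" "fst v = 0" "snd (snd v) = 0"
  shows "pdiff v (\<lambda>z. g (fst z, snd (snd z))) z = 0"
  using pdiff_comp_linear[OF bl_thxi assms(1), of v z] pdiff_zero_dir[OF assms(1)] assms(2,3)
  by (simp add: zero_prod_def)

lemma pdiff_thp_zero:
  assumes "\<And>x. g differentiable (at x)" "fst v = 0" "fst (snd v) = 0"
  shows "pdiff v (\<lambda>z. g (fst z, fst (snd z))) z = 0"
  using pdiff_comp_linear[OF bl_thp assms(1), of v z] pdiff_zero_dir[OF assms(1)] assms(2,3)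
  by (simp add: zero_prod_def)

lemma diff_thxi:
  assumes "\<And>x. g differentiable (at x)"
  shows "(\<lambda>z. g (fst z, snd (snd z))) differentiable (at z)"
  using differentiable_compose[OF assms bounded_linear_imp_differentiable[OF bl_thxi]] .

lemma diff_thp:
  assumes "\<And>x. g differentiable (at x)"
  shows "(\<lambda>z. g (fst z, fst (snd z))) differentiable (at z)"
  using differentiable_compose[OF assms bounded_linear_imp_differentiable[OF bl_thp]] .

lemma axis_nth_if: "axis j (1::real) $ i = (if i = j then 1 else 0)"
  by (simp add: axis_def)

lemma alg_identity:
  fixes f :: "'k::finite \<Rightarrow> real" and \<xi> A :: "'k \<Rightarrow> 'n::finite \<Rightarrow> 'n \<Rightarrow> real" and p :: "'n \<Rightarrow> real"
  shows "- (\<Sum>i\<in>UNIV. (\<Sum>k\<in>UNIV. f k * \<xi> k i i) - (\<Sum>j\<in>UNIV. (\<Sum>k\<in>UNIV. f k * \<xi> k i j) * p j) * p i)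
    + (\<Sum>i\<in>UNIV. \<Sum>j\<in>UNIV. (\<Sum>k\<in>UNIV. f k * A k i j) * (if i = j then 1 else 0) - (\<Sum>k\<in>UNIV. f k * A k i j) * p i * p j)
    - (\<Sum>k\<in>UNIV. \<Sum>i\<in>UNIV. \<Sum>j\<in>UNIV. f k * (p i * p j - (if i = j then 1 else 0)) * (\<xi> k i j - A k i j)) = 0"
proof -
  have a: "(\<Sum>i\<in>UNIV. (\<Sum>k\<in>UNIV. f k * \<xi> k i i) - (\<Sum>j\<in>UNIV. (\<Sum>k\<in>UNIV. f k * \<xi> k i j) * p j) * p i)
     = (\<Sum>i\<in>UNIV. \<Sum>j\<in>UNIV. \<Sum>k\<in>UNIV. f k * \<xi> k i j * ((if i = j then 1 else 0) - p j * p i))"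
  proof -
    have "(\<Sum>k\<in>UNIV. f k * \<xi> k i i) = (\<Sum>j\<in>UNIV. \<Sum>k\<in>UNIV. f k * \<xi> k i j * (if i = j then 1 else 0))" for i
      by (simp add: if_distrib[of "\<lambda>x. _ * x"] sum.swap[of _ UNIV UNIV] cong: if_cong)
    then show ?thesis
      by (simp add: sum_distrib_right sum_distrib_left right_diff_distrib sum_subtractf mult_ac)
  qed
  have b: "(\<Sum>i\<in>UNIV. \<Sum>j\<in>UNIV. (\<Sum>k\<in>UNIV. f k * A k i j) * (if i = j then 1 else 0) - (\<Sum>k\<in>UNIV. f k * A k i j) * p i * p j)
     = (\<Sum>i\<in>UNIV. \<Sum>j\<in>UNIV. \<Sum>k\<in>UNIV. f k * A k i j * ((if i = j then 1 else 0) - p i * p j))"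
    by (simp add: sum_distrib_right sum_distrib_left right_diff_distrib sum_subtractf mult_ac)
  have c: "(\<Sum>k\<in>UNIV. \<Sum>i\<in>UNIV. \<Sum>j\<in>UNIV. f k * (p i * p j - (if i = j then 1 else 0)) * (\<xi> k i j - A k i j))
     = (\<Sum>i\<in>UNIV. \<Sum>j\<in>UNIV. \<Sum>k\<in>UNIV. f k * (p i * p j - (if i = j then 1 else 0)) * (\<xi> k i j - A k i j))"
    by (subst sum.swap) (subst (2) sum.swap, rule refl)
  have d: "- (\<Sum>i\<in>UNIV. \<Sum>j\<in>UNIV. \<Sum>k\<in>UNIV. f k * \<xi> k i j * ((if i = j then 1 else 0) - p j * p i))
     + (\<Sum>i\<in>UNIV. \<Sum>j\<in>UNIV. \<Sum>k\<in>UNIV. f k * A k i j * ((if i = j then 1 else 0) - p i * p j))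
     - (\<Sum>i\<in>UNIV. \<Sum>j\<in>UNIV. \<Sum>k\<in>UNIV. f k * (p i * p j - (if i = j then 1 else 0)) * (\<xi> k i j - A k i j))
     = (\<Sum>i\<in>UNIV. \<Sum>j\<in>UNIV. \<Sum>k\<in>UNIV. (- (f k * \<xi> k i j * ((if i = j then 1 else 0) - p j * p i))
         + f k * A k i j * ((if i = j then 1 else 0) - p i * p j))
         - f k * (p i * p j - (if i = j then 1 else 0)) * (\<xi> k i j - A k i j))"
    by (simp add: sum.distrib sum_subtractf sum_negf)
  have e: "(- (f k * \<xi> k i j * ((if i = j then 1 else 0) - p j * p i))
         + f k * A k i j * ((if i = j then 1 else 0) - p i * p j))
         - f k * (p i * p j - (if i = j then 1 else 0)) * (\<xi> k i j - A k i j) = 0" for k i j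
    by (simp add: algebra_simps)
  show ?thesis unfolding a b c d e by simp
qed


lemma gen_main:
  fixes \<pi> :: "real^'n::finite \<Rightarrow> real" and f :: "'k::finite \<Rightarrow> real^'n \<Rightarrow> real"
    and A0 :: "real^'n^'n^'k" and \<eta> :: "'k \<Rightarrow> real" and \<phi> :: "('n, 'k) state \<Rightarrow> real"
  assumes ps: "smooth \<pi>" and pp: "\<And>\<theta>. 0 < \<pi> \<theta>" and ls: "smooth (\<lambda>\<theta>. ln (\<pi> \<theta>))"
    and fs: "\<And>k. smooth (f k)" and eta: "\<And>k. 0 < \<eta> k"
    and phs: "smooth \<phi>" and cs: "compact (closure {z. \<phi> z \<noteq> 0})"
  shows "integrable lborel (\<lambda>z. nuK_density \<pi> A0 \<eta> z * generator \<pi> f A0 \<eta> \<phi> z)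
     \<and> integral\<^sup>L lborel (\<lambda>z. nuK_density \<pi> A0 \<eta> z * generator \<pi> f A0 \<eta> \<phi> z) = 0"
proof -
  define \<rho> where "\<rho> = nuK_density \<pi> A0 \<eta>"
  define S where "S = closure {z. \<phi> z \<noteq> 0}"
  have S: "compact S" using cs S_def by simp
  have clS: "closed S" using S compact_imp_closed by blast
  have supp: "\<phi> z = 0" if "z \<notin> S" for z
  proof (rule ccontr)
    assume "\<phi> z \<noteq> 0"
    then have "z \<in> {z. \<phi> z \<noteq> 0}" by simp
    then have "z \<in> S" unfolding S_def using closure_subset by (rule subsetD[rotated])
    with that show False by simp
  qed
  have pd: "\<And>x. \<pi> differentiable (at x)" using ps smooth_diff by blast
  have \<rho>d: "\<And>z. \<rho> differentiable (at z)" unfolding \<rho>_def using rho_diff[OF pd] .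
  have \<rho>c: "continuous_on UNIV \<rho>" using \<rho>d diff_cont by blast
  have \<phi>d: "\<And>z. \<phi> differentiable (at z)" using phs smooth_diff by blast
  have \<phi>1d: "\<And>v z. pdiff v \<phi> differentiable (at z)" using phs smooth_pdiff_diff by blast
  have \<phi>1c: "\<And>v. continuous_on UNIV (pdiff v \<phi>)" using \<phi>1d diff_cont by blast
  have \<phi>2c: "\<And>a b. continuous_on UNIV (pdiff a (pdiff b \<phi>))" using phs smooth_pdiff2_diff diff_cont by blast
  have fd: "\<And>k x. f k differentiable (at x)" using fs smooth_diff by blast
  have fc: "\<And>k. continuous_on UNIV (f k)" using fd diff_cont by blast
  define Lg where "Lg i = pdiff (axis i 1) (\<lambda>\<theta>. ln (\<pi> \<theta>))" for i
  have Lgd: "\<And>i x. Lg i differentiable (at x)" unfolding Lg_def using ls smooth_pdiff_diff by blast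
  have Lgc: "\<And>i. continuous_on UNIV (Lg i)" using Lgd diff_cont by blast
  have Dpc: "\<And>i. continuous_on UNIV (pdiff (axis i 1) \<pi>)" using ps smooth_pdiff_diff diff_cont by blast
  have Efc: "continuous_on UNIV (Ef A0 \<eta>)" using Ef_diff diff_cont by blast
  have Lgpi: "Lg i \<theta> * \<pi> \<theta> = pdiff (axis i 1) \<pi> \<theta>" for i \<theta>
  proof -
    have "(\<pi> has_derivative frechet_derivative \<pi> (at \<theta>)) (at \<theta>)"
      using pd frechet_derivative_works by blast
    from DERIV_compose_FDERIV[OF DERIV_ln_divide[OF pp[of \<theta>]] this]
    have "((\<lambda>x. ln (\<pi> x)) has_derivative (\<lambda>x. frechet_derivative \<pi> (at \<theta>) x * (1 / \<pi> \<theta>))) (at \<theta>)" .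
    from pdiff_eq[OF this, of "axis i 1"] show ?thesis
      using pp[of \<theta>] by (simp add: Lg_def pdiff_def)
  qed
  have \<rho>eq: "\<rho> z = \<pi> (fst z) * Ef A0 \<eta> (snd z)" for z
    by (simp add: \<rho>_def nuK_density_eq2)
  have IB: "integrable lborel (\<lambda>z. pdiff v \<phi> z * w z) \<and> integrable lborel (\<lambda>z. \<phi> z * pdiff v w z)
      \<and> integral\<^sup>L lborel (\<lambda>z. pdiff v \<phi> z * w z) = - integral\<^sup>L lborel (\<lambda>z. \<phi> z * pdiff v w z)"
    if "\<And>z. w differentiable (at z)" "continuous_on UNIV (pdiff v w)" for v w
    using ibp[OF \<phi>d that(1) \<phi>1c that(2) S supp] by blast
  have supp1: "pdiff b \<phi> z = 0" if "z \<notin> S" for b z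
    using deriv_zero_outside[OF clS supp that] .
  have IB2: "integrable lborel (\<lambda>z. pdiff v (pdiff b \<phi>) z * w z) \<and> integrable lborel (\<lambda>z. pdiff b \<phi> z * pdiff v w z)
      \<and> integral\<^sup>L lborel (\<lambda>z. pdiff v (pdiff b \<phi>) z * w z) = - integral\<^sup>L lborel (\<lambda>z. pdiff b \<phi> z * pdiff v w z)"
    if "\<And>z. w differentiable (at z)" "continuous_on UNIV (pdiff v w)" for v b w
    using ibp[OF \<phi>1d that(1) \<phi>2c that(2) S supp1] by blast
  have cfst: "continuous_on UNIV (\<lambda>z::('n,'k) state. g (fst z))" if "continuous_on UNIV g" for g :: "real^'n \<Rightarrow> real"
    by (rule continuous_on_compose2[OF that]) (auto intro!: continuous_intros)
  have csnd: "continuous_on UNIV (\<lambda>z::('n,'k) state. Ef A0 \<eta> (snd z))"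
    by (rule continuous_on_compose2[OF Efc]) (auto intro!: continuous_intros)

  define w1 where "w1 i z = fst (snd z) $ i * \<rho> z" for i z
  have w1d: "w1 i differentiable (at z)" for i z
    unfolding w1_def[abs_def] by (rule differentiable_mult[OF diff_p \<rho>d])
  have pw1: "pdiff (dir_theta i) (w1 i) z = fst (snd z) $ i * (pdiff (axis i 1) \<pi> (fst z) * Ef A0 \<eta> (snd z))" for i z
    unfolding w1_def[abs_def] pdiff_mult[OF diff_p \<rho>d] pdiff_p
    unfolding \<rho>_def rho_dtheta[OF pd] by (simp add: dir_theta_def)
  have T1: "integrable lborel (\<lambda>z. pdiff (dir_theta i) \<phi> z * w1 i z) \<and> integrable lborel (\<lambda>z. \<phi> z * pdiff (dir_theta i) (w1 i) z)
      \<and> integral\<^sup>L lborel (\<lambda>z. pdiff (dir_theta i) \<phi> z * w1 i z) = - integral\<^sup>L lborel (\<lambda>z. \<phi> z * pdiff (dir_theta i) (w1 i) z)" for i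
    by (rule IB[OF w1d]) (unfold pw1, intro continuous_intros cfst Dpc csnd)

  define w2 where "w2 i z = Lg i (fst z) * \<rho> z" for i z
  have w2d: "w2 i differentiable (at z)" for i z
    unfolding w2_def[abs_def] by (rule differentiable_mult[OF comp_fst_diff[OF Lgd] \<rho>d])
  have pw2: "pdiff (dir_p i) (w2 i) z = Lg i (fst z) * (- (fst (snd z) $ i) * \<rho> z)" for i z
  proof -
    have "pdiff (dir_p i) (\<lambda>z. Lg i (fst z)) z = 0"
      by (rule pdiff_fst_zero[OF Lgd]) (simp add: dir_p_def)
    then show ?thesis
      unfolding w2_def[abs_def] pdiff_mult[OF comp_fst_diff[OF Lgd] \<rho>d]
      unfolding \<rho>_def rho_dp[OF pd] by simp
  qed
  have T2: "integrable lborel (\<lambda>z. pdiff (dir_p i) \<phi> z * w2 i z) \<and> integrable lborel (\<lambda>z. \<phi> z * pdiff (dir_p i) (w2 i) z)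
      \<and> integral\<^sup>L lborel (\<lambda>z. pdiff (dir_p i) \<phi> z * w2 i z) = - integral\<^sup>L lborel (\<lambda>z. \<phi> z * pdiff (dir_p i) (w2 i) z)" for i
    by (rule IB[OF w2d]) (unfold pw2, intro continuous_intros cfst Lgc \<rho>c)

  define Bf where "Bf i j y = (\<Sum>k\<in>UNIV. f k (fst y) * snd y $ k $ i $ j)"
    for i j and y :: "(real^'n) \<times> (real^'n^'n^'k)"
  have Bfd: "Bf i j differentiable (at y)" for i j y
  proof -
    have bl: "bounded_linear (\<lambda>y::(real^'n) \<times> (real^'n^'n^'k). snd y $ k $ i $ j)" for k
      by (intro bounded_linear_compose[OF bounded_linear_vec_nth] bounded_linear_snd)
    show ?thesis unfolding Bf_def[abs_def]
      by (intro differentiable_sum ballI differentiable_mult comp_fst_diff fd bounded_linear_imp_differentiable[OF bl]) auto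
  qed
  define Xv where "Xv i z = (\<Sum>j\<in>UNIV. Bf i j (fst z, snd (snd z)) * fst (snd z) $ j)" for i and z :: "('n, 'k) state"
  have Xveq: "(xi_of f (snd (snd z)) (fst z) *v fst (snd z)) $ i = Xv i z" for i z
    by (simp add: matrix_vector_mult_def xi_of_def Xv_def Bf_def)
  have xieq: "xi_of f \<xi> \<theta> $ i $ i = Bf i i (\<theta>, \<xi>)" for i \<theta> \<xi>
    by (simp add: xi_of_def Bf_def)
  have Xvd: "Xv i differentiable (at z)" for i z
    unfolding Xv_def[abs_def]
    by (intro differentiable_sum ballI differentiable_mult[OF diff_thxi[OF Bfd] diff_p]) auto
  have pXv: "pdiff (dir_p i) (Xv i) z = Bf i i (fst z, snd (snd z))" for i z
  proof -
    have "pdiff (dir_p i) (\<lambda>z. Bf i j (fst z, snd (snd z))) z = 0" for j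
      by (rule pdiff_thxi_zero[OF Bfd]) (auto simp: dir_p_def)
    then show ?thesis
      unfolding Xv_def[abs_def]
      apply (subst pdiff_sum)
        apply (auto intro!: differentiable_mult[OF diff_thxi[OF Bfd] diff_p])[2]
      apply (simp add: pdiff_mult[OF diff_thxi[OF Bfd] diff_p] pdiff_p)
      apply (simp add: dir_p_def axis_nth_if if_distrib[of "\<lambda>x. _ * x"] cong: if_cong)
      done
  qed
  define w3 where "w3 i z = Xv i z * \<rho> z" for i z
  have w3d: "w3 i differentiable (at z)" for i z
    unfolding w3_def[abs_def] by (rule differentiable_mult[OF Xvd \<rho>d])
  have pw3: "pdiff (dir_p i) (w3 i) z = Bf i i (fst z, snd (snd z)) * \<rho> z + Xv i z * (- (fst (snd z) $ i) * \<rho> z)" for i z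
    unfolding w3_def[abs_def] pdiff_mult[OF Xvd \<rho>d] pXv
    unfolding \<rho>_def rho_dp[OF pd] by simp
  have Bfc: "continuous_on UNIV (\<lambda>z::('n,'k) state. Bf i i (fst z, snd (snd z)))" for i
    using diff_thxi[OF Bfd] diff_cont by blast
  have Xvc: "continuous_on UNIV (Xv i)" for i
    using Xvd diff_cont by blast
  have T3: "integrable lborel (\<lambda>z. pdiff (dir_p i) \<phi> z * w3 i z) \<and> integrable lborel (\<lambda>z. \<phi> z * pdiff (dir_p i) (w3 i) z)
      \<and> integral\<^sup>L lborel (\<lambda>z. pdiff (dir_p i) \<phi> z * w3 i z) = - integral\<^sup>L lborel (\<lambda>z. \<phi> z * pdiff (dir_p i) (w3 i) z)" for i
    by (rule IB[OF w3d]) (unfold pw3, intro continuous_intros Bfc Xvc \<rho>c)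

  define Am where "Am i j \<theta> = (\<Sum>k\<in>UNIV. f k \<theta> * A0 $ k $ i $ j)" for i j \<theta>
  have Amd: "Am i j differentiable (at x)" for i j x
    unfolding Am_def[abs_def] by (intro differentiable_sum ballI differentiable_mult fd differentiable_const) auto
  have Amc: "continuous_on UNIV (Am i j)" for i j using Amd diff_cont by blast
  have Ameq: "Amat f A0 \<theta> $ i $ j = Am i j \<theta>" for i j \<theta>
    by (simp add: Amat_def Am_def)
  define w4 where "w4 i j z = Am i j (fst z) * \<rho> z" for i j z
  define w4b where "w4b i j z = (Am i j (fst z) * fst (snd z) $ i) * \<rho> z" for i j z
  have w4d: "w4 i j differentiable (at z)" for i j z
    unfolding w4_def[abs_def] by (rule differentiable_mult[OF comp_fst_diff[OF Amd] \<rho>d])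
  have w4bd: "w4b i j differentiable (at z)" for i j z
    unfolding w4b_def[abs_def] by (intro differentiable_mult[OF differentiable_mult[OF comp_fst_diff[OF Amd] diff_p] \<rho>d])
  have pAm0: "pdiff (dir_p l) (\<lambda>z. Am i j (fst z)) z = 0" for i j l z
    by (rule pdiff_fst_zero[OF Amd]) (simp add: dir_p_def)
  have pw4: "pdiff (dir_p i) (w4 i j) z = - w4b i j z" for i j z
    unfolding w4_def[abs_def] pdiff_mult[OF comp_fst_diff[OF Amd] \<rho>d] pAm0
    unfolding \<rho>_def rho_dp[OF pd] by (simp add: w4b_def \<rho>_def)
  have pw4b: "pdiff (dir_p j) (w4b i j) z = (Am i j (fst z) * (if i = j then 1 else 0)) * \<rho> z
      + (Am i j (fst z) * fst (snd z) $ i) * (- (fst (snd z) $ j) * \<rho> z)" for i j z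
    unfolding w4b_def[abs_def] pdiff_mult[OF differentiable_mult[OF comp_fst_diff[OF Amd] diff_p] \<rho>d]
      pdiff_mult[OF comp_fst_diff[OF Amd] diff_p] pAm0 pdiff_p
    unfolding \<rho>_def rho_dp[OF pd] by (simp add: dir_p_def axis_nth_if)
  have T4a: "integrable lborel (\<lambda>z. pdiff (dir_p i) (pdiff (dir_p j) \<phi>) z * w4 i j z)
      \<and> integrable lborel (\<lambda>z. pdiff (dir_p j) \<phi> z * pdiff (dir_p i) (w4 i j) z)
      \<and> integral\<^sup>L lborel (\<lambda>z. pdiff (dir_p i) (pdiff (dir_p j) \<phi>) z * w4 i j z)
        = - integral\<^sup>L lborel (\<lambda>z. pdiff (dir_p j) \<phi> z * pdiff (dir_p i) (w4 i j) z)" for i j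
    by (rule IB2[OF w4d]) (unfold pw4 w4b_def, intro continuous_intros cfst Amc \<rho>c)
  have T4b: "integrable lborel (\<lambda>z. pdiff (dir_p j) \<phi> z * w4b i j z) \<and> integrable lborel (\<lambda>z. \<phi> z * pdiff (dir_p j) (w4b i j) z)
      \<and> integral\<^sup>L lborel (\<lambda>z. pdiff (dir_p j) \<phi> z * w4b i j z) = - integral\<^sup>L lborel (\<lambda>z. \<phi> z * pdiff (dir_p j) (w4b i j) z)" for i j
    by (rule IB[OF w4bd]) (unfold pw4b, intro continuous_intros cfst Amc \<rho>c)
  have T4: "integrable lborel (\<lambda>z. pdiff (dir_p i) (pdiff (dir_p j) \<phi>) z * w4 i j z) \<and> integrable lborel (\<lambda>z. \<phi> z * pdiff (dir_p j) (w4b i j) z)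
      \<and> integral\<^sup>L lborel (\<lambda>z. pdiff (dir_p i) (pdiff (dir_p j) \<phi>) z * w4 i j z) = - integral\<^sup>L lborel (\<lambda>z. \<phi> z * pdiff (dir_p j) (w4b i j) z)" for i j
  proof -
    have "integral\<^sup>L lborel (\<lambda>z. pdiff (dir_p j) \<phi> z * pdiff (dir_p i) (w4 i j) z)
        = - integral\<^sup>L lborel (\<lambda>z. pdiff (dir_p j) \<phi> z * w4b i j z)"
      unfolding pw4 by simp
    then show ?thesis using T4a[of i j] T4b[of j i] by simp
  qed

  define Cf where "Cf k i j y = f k (fst y) / \<eta> k * (snd y $ i * snd y $ j - (if i = j then 1 else 0))"
    for k i j and y :: "(real^'n) \<times> (real^'n)"
  have Cfd: "Cf k i j differentiable (at y)" for k i j y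
  proof -
    have bl: "bounded_linear (\<lambda>y::(real^'n) \<times> (real^'n). snd y $ i)" for i
      by (intro bounded_linear_compose[OF bounded_linear_vec_nth] bounded_linear_snd)
    show ?thesis unfolding Cf_def[abs_def]
      by (intro differentiable_mult differentiable_divide differentiable_diff comp_fst_diff fd
          differentiable_const bounded_linear_imp_differentiable[OF bl]) (use eta in \<open>auto simp: less_imp_neq[symmetric]\<close>)
  qed
  define w5 where "w5 k i j z = Cf k i j (fst z, fst (snd z)) * \<rho> z" for k i j z
  have w5d: "w5 k i j differentiable (at z)" for k i j z
    unfolding w5_def[abs_def] by (rule differentiable_mult[OF diff_thp[OF Cfd] \<rho>d])
  have pw5: "pdiff (dir_xi k i j) (w5 k i j) z
      = Cf k i j (fst z, fst (snd z)) * (- (\<eta> k * (snd (snd z) $ k $ i $ j - A0 $ k $ i $ j)) * \<rho> z)" for k i j z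
  proof -
    have "pdiff (dir_xi k i j) (\<lambda>z. Cf k i j (fst z, fst (snd z))) z = 0"
      by (rule pdiff_thp_zero[OF Cfd]) (auto simp: dir_xi_def)
    then show ?thesis
      unfolding w5_def[abs_def] pdiff_mult[OF diff_thp[OF Cfd] \<rho>d]
      unfolding \<rho>_def rho_dxi[OF pd] by simp
  qed
  have Cfc: "continuous_on UNIV (\<lambda>z::('n,'k) state. Cf k i j (fst z, fst (snd z)))" for k i j
    using diff_thp[OF Cfd] diff_cont by blast
  have T5: "integrable lborel (\<lambda>z. pdiff (dir_xi k i j) \<phi> z * w5 k i j z) \<and> integrable lborel (\<lambda>z. \<phi> z * pdiff (dir_xi k i j) (w5 k i j) z)
      \<and> integral\<^sup>L lborel (\<lambda>z. pdiff (dir_xi k i j) \<phi> z * w5 k i j z) = - integral\<^sup>L lborel (\<lambda>z. \<phi> z * pdiff (dir_xi k i j) (w5 k i j) z)" for k i j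
    by (rule IB[OF w5d]) (unfold pw5, intro continuous_intros Cfc \<rho>c)

  define P1 where "P1 i z = pdiff (dir_theta i) \<phi> z * w1 i z" for i z
  define Q1 where "Q1 i z = \<phi> z * pdiff (dir_theta i) (w1 i) z" for i z
  define P2 where "P2 i z = pdiff (dir_p i) \<phi> z * w2 i z" for i z
  define Q2 where "Q2 i z = \<phi> z * pdiff (dir_p i) (w2 i) z" for i z
  define P3 where "P3 i z = pdiff (dir_p i) \<phi> z * w3 i z" for i z
  define Q3 where "Q3 i z = \<phi> z * pdiff (dir_p i) (w3 i) z" for i z
  define P4 where "P4 i j z = pdiff (dir_p i) (pdiff (dir_p j) \<phi>) z * w4 i j z" for i j z
  define Q4 where "Q4 i j z = \<phi> z * pdiff (dir_p j) (w4b i j) z" for i j z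
  define P5 where "P5 k i j z = pdiff (dir_xi k i j) \<phi> z * w5 k i j z" for k i j z
  define Q5 where "Q5 k i j z = \<phi> z * pdiff (dir_xi k i j) (w5 k i j) z" for k i j z
  have zero: "(\<Sum>i\<in>UNIV. Q1 i z) + (\<Sum>i\<in>UNIV. Q2 i z) - (\<Sum>i\<in>UNIV. Q3 i z)
        + (\<Sum>i\<in>UNIV. \<Sum>j\<in>UNIV. Q4 i j z) + (\<Sum>k\<in>UNIV. \<Sum>i\<in>UNIV. \<Sum>j\<in>UNIV. Q5 k i j z) = 0" for z
  proof -
    define c where "c = \<phi> z * \<rho> z"
    have q12: "Q1 i z + Q2 i z = 0" for i
      unfolding Q1_def Q2_def pw1 pw2 \<rho>eq Lgpi[symmetric] by (simp add: algebra_simps)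
    have s12: "(\<Sum>i\<in>UNIV. Q1 i z) + (\<Sum>i\<in>UNIV. Q2 i z) = 0"
      by (simp add: sum.distrib[symmetric] q12)
    have q3: "Q3 i z = c * ((\<Sum>k\<in>UNIV. f k (fst z) * snd (snd z) $ k $ i $ i)
        - (\<Sum>j\<in>UNIV. (\<Sum>k\<in>UNIV. f k (fst z) * snd (snd z) $ k $ i $ j) * fst (snd z) $ j) * fst (snd z) $ i)" for i
      unfolding Q3_def pw3 Xv_def Bf_def c_def by (simp add: algebra_simps)
    have q4: "Q4 i j z = c * ((\<Sum>k\<in>UNIV. f k (fst z) * A0 $ k $ i $ j) * (if i = j then 1 else 0)
        - (\<Sum>k\<in>UNIV. f k (fst z) * A0 $ k $ i $ j) * fst (snd z) $ i * fst (snd z) $ j)" for i j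
      unfolding Q4_def pw4b Am_def c_def by (simp add: algebra_simps)
    have q5: "Q5 k i j z = - (c * (f k (fst z) * (fst (snd z) $ i * fst (snd z) $ j - (if i = j then 1 else 0))
        * (snd (snd z) $ k $ i $ j - A0 $ k $ i $ j)))" for k i j
      unfolding Q5_def pw5 Cf_def c_def using eta[of k] by (simp add: field_simps)
    define a where "a = (\<Sum>i\<in>UNIV. (\<Sum>k\<in>UNIV. f k (fst z) * snd (snd z) $ k $ i $ i)
        - (\<Sum>j\<in>UNIV. (\<Sum>k\<in>UNIV. f k (fst z) * snd (snd z) $ k $ i $ j) * fst (snd z) $ j) * fst (snd z) $ i)"
    define b where "b = (\<Sum>i\<in>UNIV. \<Sum>j\<in>UNIV. (\<Sum>k\<in>UNIV. f k (fst z) * A0 $ k $ i $ j) * (if i = j then 1 else 0)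
        - (\<Sum>k\<in>UNIV. f k (fst z) * A0 $ k $ i $ j) * fst (snd z) $ i * fst (snd z) $ j)"
    define d where "d = (\<Sum>k\<in>UNIV. \<Sum>i\<in>UNIV. \<Sum>j\<in>UNIV. f k (fst z) * (fst (snd z) $ i * fst (snd z) $ j - (if i = j then 1 else 0))
        * (snd (snd z) $ k $ i $ j - A0 $ k $ i $ j))"
    have s3: "(\<Sum>i\<in>UNIV. Q3 i z) = c * a"
      unfolding q3 a_def by (simp only: sum_distrib_left)
    have s4: "(\<Sum>i\<in>UNIV. \<Sum>j\<in>UNIV. Q4 i j z) = c * b"
      unfolding q4 b_def by (simp only: sum_distrib_left)
    have s5: "(\<Sum>k\<in>UNIV. \<Sum>i\<in>UNIV. \<Sum>j\<in>UNIV. Q5 k i j z) = - (c * d)"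
      unfolding q5 d_def by (simp only: sum_distrib_left sum_negf)
    have alg: "- a + b - d = 0"
      unfolding a_def b_def d_def
      using alg_identity[of "\<lambda>k. f k (fst z)" "\<lambda>k i j. snd (snd z) $ k $ i $ j" "\<lambda>i. fst (snd z) $ i" "\<lambda>k i j. A0 $ k $ i $ j"]
      by simp
    have h: "- (c * a) + c * b - c * d = 0"
    proof -
      have "- (c * a) + c * b - c * d = c * (- a + b - d)" by (simp add: algebra_simps)
      then show ?thesis using alg by simp
    qed
    show ?thesis using s12 s3 s4 s5 h by linarith
  qed
  have L: "integrable lborel (\<lambda>z. (\<Sum>i\<in>UNIV. P1 i z) + (\<Sum>i\<in>UNIV. P2 i z) - (\<Sum>i\<in>UNIV. P3 i z)
        + (\<Sum>i\<in>UNIV. \<Sum>j\<in>UNIV. P4 i j z) + (\<Sum>k\<in>UNIV. \<Sum>i\<in>UNIV. \<Sum>j\<in>UNIV. P5 k i j z))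
    \<and> integral\<^sup>L lborel (\<lambda>z. (\<Sum>i\<in>UNIV. P1 i z) + (\<Sum>i\<in>UNIV. P2 i z) - (\<Sum>i\<in>UNIV. P3 i z)
        + (\<Sum>i\<in>UNIV. \<Sum>j\<in>UNIV. P4 i j z) + (\<Sum>k\<in>UNIV. \<Sum>i\<in>UNIV. \<Sum>j\<in>UNIV. P5 k i j z)) = 0"
  proof (rule lin_comb[OF _ _ _ _ _ zero])
    show "integrable lborel (P1 i) \<and> integrable lborel (Q1 i) \<and> integral\<^sup>L lborel (P1 i) = - integral\<^sup>L lborel (Q1 i)" for i
      unfolding P1_def[abs_def] Q1_def[abs_def] using T1 by simp
    show "integrable lborel (P2 i) \<and> integrable lborel (Q2 i) \<and> integral\<^sup>L lborel (P2 i) = - integral\<^sup>L lborel (Q2 i)" for i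
      unfolding P2_def[abs_def] Q2_def[abs_def] using T2 by simp
    show "integrable lborel (P3 i) \<and> integrable lborel (Q3 i) \<and> integral\<^sup>L lborel (P3 i) = - integral\<^sup>L lborel (Q3 i)" for i
      unfolding P3_def[abs_def] Q3_def[abs_def] using T3 by simp
    show "integrable lborel (P4 i j) \<and> integrable lborel (Q4 i j) \<and> integral\<^sup>L lborel (P4 i j) = - integral\<^sup>L lborel (Q4 i j)" for i j
      unfolding P4_def[abs_def] Q4_def[abs_def] using T4 by simp
    show "integrable lborel (P5 k i j) \<and> integrable lborel (Q5 k i j) \<and> integral\<^sup>L lborel (P5 k i j) = - integral\<^sup>L lborel (Q5 k i j)" for k i j
      unfolding P5_def[abs_def] Q5_def[abs_def] using T5 by simp
  qed
  have dec: "nuK_density \<pi> A0 \<eta> z * generator \<pi> f A0 \<eta> \<phi> z = (\<Sum>i\<in>UNIV. P1 i z) + (\<Sum>i\<in>UNIV. P2 i z) - (\<Sum>i\<in>UNIV. P3 i z)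
        + (\<Sum>i\<in>UNIV. \<Sum>j\<in>UNIV. P4 i j z) + (\<Sum>k\<in>UNIV. \<Sum>i\<in>UNIV. \<Sum>j\<in>UNIV. P5 k i j z)" for z
  proof -
    have g: "generator \<pi> f A0 \<eta> \<phi> z =
      (\<Sum>i\<in>UNIV. fst (snd z) $ i * pdiff (dir_theta i) \<phi> z)
    + (\<Sum>i\<in>UNIV. pdiff (axis i 1) (\<lambda>t. ln (\<pi> t)) (fst z) * pdiff (dir_p i) \<phi> z)
    - (\<Sum>i\<in>UNIV. (xi_of f (snd (snd z)) (fst z) *v fst (snd z)) $ i * pdiff (dir_p i) \<phi> z)
    + (\<Sum>i\<in>UNIV. \<Sum>j\<in>UNIV. Amat f A0 (fst z) $ i $ j * iter_pdiff [dir_p i, dir_p j] \<phi> z)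
    + (\<Sum>k\<in>UNIV. f k (fst z) / \<eta> k *
         (\<Sum>i\<in>UNIV. \<Sum>j\<in>UNIV. (fst (snd z) $ i * fst (snd z) $ j - (if i = j then 1 else 0)) * pdiff (dir_xi k i j) \<phi> z))"
      by (simp add: generator_def case_prod_unfold)
    have e1: "\<rho> z * (\<Sum>i\<in>UNIV. fst (snd z) $ i * pdiff (dir_theta i) \<phi> z) = (\<Sum>i\<in>UNIV. P1 i z)"
      by (simp add: sum_distrib_left P1_def w1_def mult_ac)
    have e2: "\<rho> z * (\<Sum>i\<in>UNIV. pdiff (axis i 1) (\<lambda>t. ln (\<pi> t)) (fst z) * pdiff (dir_p i) \<phi> z) = (\<Sum>i\<in>UNIV. P2 i z)"
      by (simp add: sum_distrib_left P2_def w2_def Lg_def mult_ac)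
    have e3: "\<rho> z * (\<Sum>i\<in>UNIV. (xi_of f (snd (snd z)) (fst z) *v fst (snd z)) $ i * pdiff (dir_p i) \<phi> z) = (\<Sum>i\<in>UNIV. P3 i z)"
      unfolding Xveq by (simp add: sum_distrib_left P3_def w3_def mult_ac)
    have e4: "\<rho> z * (\<Sum>i\<in>UNIV. \<Sum>j\<in>UNIV. Amat f A0 (fst z) $ i $ j * iter_pdiff [dir_p i, dir_p j] \<phi> z) = (\<Sum>i\<in>UNIV. \<Sum>j\<in>UNIV. P4 i j z)"
      unfolding Ameq by (simp add: sum_distrib_left P4_def w4_def mult_ac)
    have e5: "\<rho> z * (\<Sum>k\<in>UNIV. f k (fst z) / \<eta> k *
         (\<Sum>i\<in>UNIV. \<Sum>j\<in>UNIV. (fst (snd z) $ i * fst (snd z) $ j - (if i = j then 1 else 0)) * pdiff (dir_xi k i j) \<phi> z))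
       = (\<Sum>k\<in>UNIV. \<Sum>i\<in>UNIV. \<Sum>j\<in>UNIV. P5 k i j z)"
      by (simp add: sum_distrib_left P5_def w5_def Cf_def mult_ac)
    show ?thesis
      unfolding g \<rho>_def[symmetric] using e1 e2 e3 e4 e5 by (simp add: distrib_left right_diff_distrib)
  qed
  show ?thesis using L unfolding dec .
qed

theorem theorem4p1:
  fixes \<pi> :: "real^'n::finite \<Rightarrow> real"
    and f :: "'k::finite \<Rightarrow> real^'n \<Rightarrow> real"
    and A0 :: "real^'n^'n^'k"
    and \<eta> :: "'k \<Rightarrow> real"
  assumes pi_smooth: "smooth \<pi>"
    and pi_pos: "\<forall>\<theta>. 0 < \<pi> \<theta>"
    and pi_prob: "(\<pi> has_integral 1) UNIV"
    and logpi_smooth: "smooth (\<lambda>\<theta>. ln (\<pi> \<theta>))"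
    and f_smooth: "\<forall>k. smooth (f k)"
    and A0_sym: "\<forall>k. symmetric_mat (A0 $ k)"
    and A_pd: "\<forall>\<theta>. pos_def_mat (Amat f A0 \<theta>)"
    and A_sqrt_smooth: "\<exists>S :: real^'n \<Rightarrow> real^'n^'n. smooth S \<and>
          (\<forall>\<theta>. pos_semidef_mat (S \<theta>) \<and> S \<theta> ** S \<theta> = Amat f A0 \<theta>)"
    and eta_pos: "\<forall>k. 0 < \<eta> k"
  shows "prob_space (nuK \<pi> A0 \<eta>)
    \<and> (\<forall>\<phi> :: ('n, 'k) state \<Rightarrow> real. smooth \<phi> \<and> compact (closure {z. \<phi> z \<noteq> 0}) \<longrightarrow>
          integrable (nuK \<pi> A0 \<eta>) (generator \<pi> f A0 \<eta> \<phi>)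
          \<and> integral\<^sup>L (nuK \<pi> A0 \<eta>) (generator \<pi> f A0 \<eta> \<phi>) = 0)
    \<and> distr (nuK \<pi> A0 \<eta>) lborel fst = density lborel (\<lambda>\<theta>. ennreal (\<pi> \<theta>))"
proof -
  have pd: "\<And>x. \<pi> differentiable (at x)" using pi_smooth smooth_diff by blast
  have pc: "continuous_on UNIV \<pi>" using pd diff_cont by blast
  have pp: "\<And>x. 0 \<le> \<pi> x" using pi_pos less_imp_le by blast
  have eta: "\<And>k. 0 < \<eta> k" using eta_pos by blast
  have pi_pos': "\<And>\<theta>. 0 < \<pi> \<theta>" using pi_pos by blast
  have f_smooth': "\<And>k. smooth (f k)" using f_smooth by blast
  have M1: "prob_space (nuK \<pi> A0 \<eta>)" by (rule nuK_measure(1)[OF pc pp pi_prob]) (rule eta)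
  have M2: "distr (nuK \<pi> A0 \<eta>) lborel fst = density lborel (\<lambda>\<theta>. ennreal (\<pi> \<theta>))"
    by (rule nuK_measure(2)[OF pc pp pi_prob]) (rule eta)
  have rpos: "nuK_density \<pi> A0 \<eta> z > 0" for z
  proof -
    have "Cst A0 \<eta> > 0" unfolding Cst_def using eta by (intro mult_pos_pos prod_pos) auto
    then show ?thesis using pi_pos by (simp add: nuK_density_eq2 Ef_def)
  qed
  have rm: "nuK_density \<pi> A0 \<eta> \<in> borel_measurable lborel"
    using diff_cont[OF rho_diff[OF pd], of A0 \<eta>] borel_measurable_continuous_onI by simp
  have G: "integrable (nuK \<pi> A0 \<eta>) (generator \<pi> f A0 \<eta> \<phi>)
          \<and> integral\<^sup>L (nuK \<pi> A0 \<eta>) (generator \<pi> f A0 \<eta> \<phi>) = 0"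
    if phs: "smooth \<phi>" and cs: "compact (closure {z. \<phi> z \<noteq> 0})" for \<phi> :: "('n, 'k) state \<Rightarrow> real"
  proof -
    have GM: "integrable lborel (\<lambda>z. nuK_density \<pi> A0 \<eta> z * generator \<pi> f A0 \<eta> \<phi> z)
     \<and> integral\<^sup>L lborel (\<lambda>z. nuK_density \<pi> A0 \<eta> z * generator \<pi> f A0 \<eta> \<phi> z) = 0"
      using gen_main[OF pi_smooth pi_pos' logpi_smooth f_smooth' eta phs cs] .
    have m1: "(\<lambda>z. nuK_density \<pi> A0 \<eta> z * generator \<pi> f A0 \<eta> \<phi> z) \<in> borel_measurable lborel"
      using GM by auto
    have gm: "generator \<pi> f A0 \<eta> \<phi> \<in> borel_measurable lborel"
    proof -
      have eq: "generator \<pi> f A0 \<eta> \<phi> = (\<lambda>z. (nuK_density \<pi> A0 \<eta> z * generator \<pi> f A0 \<eta> \<phi> z) / nuK_density \<pi> A0 \<eta> z)"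
      proof (rule ext)
        fix z
        have "nuK_density \<pi> A0 \<eta> z \<noteq> 0" using rpos[of z] by simp
        then show "generator \<pi> f A0 \<eta> \<phi> z = nuK_density \<pi> A0 \<eta> z * generator \<pi> f A0 \<eta> \<phi> z / nuK_density \<pi> A0 \<eta> z"
          by (rule nonzero_mult_div_cancel_left[symmetric])
      qed
      show ?thesis by (subst eq) (rule borel_measurable_divide[OF m1 rm])
    qed
    have nn: "AE x in lborel. 0 \<le> nuK_density \<pi> A0 \<eta> x" by (rule AE_I2) (rule less_imp_le[OF rpos])
    show ?thesis
      unfolding nuK_def
      using GM integrable_density[OF gm rm nn] integral_density[OF gm rm nn] by simp
  qed
  show ?thesis
  proof (intro conjI allI impI)
    show "prob_space (nuK \<pi> A0 \<eta>)" by (rule M1)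
    show "distr (nuK \<pi> A0 \<eta>) lborel fst = density lborel (\<lambda>\<theta>. ennreal (\<pi> \<theta>))" by (rule M2)
  next
    fix \<phi> :: "('n, 'k) state \<Rightarrow> real"
    assume a: "smooth \<phi> \<and> compact (closure {z. \<phi> z \<noteq> 0})"
    show "integrable (nuK \<pi> A0 \<eta>) (generator \<pi> f A0 \<eta> \<phi>)" using G[of \<phi>] a by simp
  next
    fix \<phi> :: "('n, 'k) state \<Rightarrow> real"
    assume a: "smooth \<phi> \<and> compact (closure {z. \<phi> z \<noteq> 0})"
    show "integral\<^sup>L (nuK \<pi> A0 \<eta>) (generator \<pi> f A0 \<eta> \<phi>) = 0" using G[of \<phi>] a by simp
  qed
qed

end
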